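(* Let $T$ be a binary tree rooted at $O$, and let $p\in(0,1]$ be the common activation probability of all edges. Against every depth-first strategy $s$ of the searcher, the equal branching density $\varepsilon^*$ of the hider yields the same payoff, namely $$g(\varepsilon^*,s)=\frac12\tau(O)+\Lambda(O).$$
   Context: Setting: the stochastic search game on a finite tree $T$ rooted at $O$. Every edge has length $1$ and is active at each stage independently with the same probability $p\in(0,1]$. The hider picks an edge and stays there. The searcher, starting at $O$ and observing which edges are currently active, at each stage either waits or traverses an active edge incident to her position. The hider's payoff $g(\varepsilon,s)$ is the expected first time the searcher traverses the hider's edge. Orient the edges away from $O$. For a vertex $v$, $T_v$ is the subtree rooted at $v$ consisting of all edges below $v$. For an edge $e=(u,w)$, $T_e$ is $\{e\}\cup T_w$, rooted at $u$, and $E_e$ is its edge set. A leaf edge is an edge whose head has no outgoing edge. $T$ is binary if every vertex has at most two outgoing edges. A depth-first strategy (DFS) acts as follows at the searcher's current vertex: - if some untraversed outgoing edge is active, traverse one of them (possibly chosen at random); - if all untraversed outgoing edges are inactive, wait; - if all outgoing edges have been traversed, traverse the edge back toward $O$ if it is active, and wait otherwise. Cycle time: for a vertex or edge $z$, $\tau(z)$ is the expected time for a DFS on $T_z$, started at its root, to traverse every edge of $T_z$ and return to the root. It does not depend on the DFS. Equivalently, for binary trees: - $\tau(v)=0$ if $v$ has no outgoing edge; - $\tau(e)=\tau(w)+2/p$ for $e=(u,w)$; - $\tau(v)=\tau(e)$ if $v$ has exactly one outgoing edge $e$; - $\tau(v)=\tau(w_1)+\tau(w_2)+3/p+1/(1-(1-p)^2)$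 if $v$ has outgoing edges to $w_1,w_2$. The equal branching density $\varepsilon^*$ is the unique probability distribution on $E$ such that: - it is supported on the leaf edges; - at every vertex with two outgoing edges $e_1,e_2$, $\varepsilon^*(E_{e_1})/\tau(e_1)=\varepsilon^*(E_{e_2})/\tau(e_2)$. The function $\Lambda$ is defined recursively on rooted binary trees. Write $\Lambda(v)=\Lambda(T_v)$ and $\Lambda(e)=\Lambda(T_e)$. - $\Lambda(v)=0$ if $v$ has no outgoing edge. - If the root $r$ has a single outgoing edge $e=(r,w)$, then $\Lambda(r)=\Lambda(e)=\Lambda(w)$. - If $r$ has two outgoing edges $e_1=(r,w_1)$ and $e_2=(r,w_2)$, then $$\Lambda(r)=\frac{\tau(e_1)}{\tau(e_1)+\tau(e_2)}\Lambda(w_1)+\frac{\tau(e_2)}{\tau(e_1)+\tau(e_2)}\Lambda(w_2)+\frac12\Big(\frac1{1-(1-p)^2}-\frac1p\Big).$$ *)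

theory Defs
  imports "HOL-Probability.Probability"
begin

datatype btree = Leaf | Node1 btree | Node2 btree btree

(* Vertices are addressed by paths from the root O = []; child of v is v @ [d].
   An edge (u,w) is identified with its head w (a nonempty path), its tail is butlast w. *)
type_synonym vtx = "nat list"

fun verts :: "btree \<Rightarrow> vtx set" where
  "verts Leaf = {[]}"
| "verts (Node1 t) = insert [] (Cons 0 ` verts t)"
| "verts (Node2 l r) = insert [] (Cons 0 ` verts l \<union> Cons 1 ` verts r)"

definition edges :: "btree \<Rightarrow> vtx set" where
  "edges t = verts t - {[]}"

definition children :: "btree \<Rightarrow> vtx \<Rightarrow> vtx set" where
  "children t v = {c \<in> verts t. \<exists>d. c = v @ [d]}"

fun subt :: "btree \<Rightarrow> vtx \<Rightarrow> btree" where
  "subt t [] = t"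
| "subt (Node1 t) (0 # v) = subt t v"
| "subt (Node2 l r) (0 # v) = subt l v"
| "subt (Node2 l r) (Suc 0 # v) = subt r v"
| "subt _ _ = Leaf"

definition Esub :: "btree \<Rightarrow> vtx \<Rightarrow> vtx set" where
  "Esub t e = {x \<in> edges t. \<exists>w. x = e @ w}"

definition leaf_edges :: "btree \<Rightarrow> vtx set" where
  "leaf_edges t = {e \<in> edges t. children t e = {}}"

(* cycle time tau, via the recursion for binary trees *)
fun tau :: "real \<Rightarrow> btree \<Rightarrow> real" where
  "tau p Leaf = 0"
| "tau p (Node1 t) = tau p t + 2 / p"
| "tau p (Node2 l r) = tau p l + tau p r + 3 / p + 1 / (1 - (1 - p)^2)"

definition tau_edge :: "real \<Rightarrow> btree \<Rightarrow> vtx \<Rightarrow> real" where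
  "tau_edge p t e = tau p (subt t e) + 2 / p"

fun Lam :: "real \<Rightarrow> btree \<Rightarrow> real" where
  "Lam p Leaf = 0"
| "Lam p (Node1 t) = Lam p t"
| "Lam p (Node2 l r) =
     (tau p l + 2/p) / ((tau p l + 2/p) + (tau p r + 2/p)) * Lam p l
   + (tau p r + 2/p) / ((tau p l + 2/p) + (tau p r + 2/p)) * Lam p r
   + 1/2 * (1 / (1 - (1 - p)^2) - 1 / p)"

(* hider mixed strategies: probability distributions on the edge set *)
definition is_edge_dist :: "btree \<Rightarrow> (vtx \<Rightarrow> real) \<Rightarrow> bool" where
  "is_edge_dist t \<epsilon> \<longleftrightarrow> (\<forall>x. 0 \<le> \<epsilon> x) \<and> (\<forall>x. x \<notin> edges t \<longrightarrow> \<epsilon> x = 0)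
      \<and> sum \<epsilon> (edges t) = 1"

definition is_equal_branching :: "real \<Rightarrow> btree \<Rightarrow> (vtx \<Rightarrow> real) \<Rightarrow> bool" where
  "is_equal_branching p t \<epsilon> \<longleftrightarrow> is_edge_dist t \<epsilon>
     \<and> (\<forall>x. x \<notin> leaf_edges t \<longrightarrow> \<epsilon> x = 0)
     \<and> (\<forall>v e1 e2. v \<in> verts t \<and> e1 \<in> children t v \<and> e2 \<in> children t v \<and> e1 \<noteq> e2 \<longrightarrow>
          sum \<epsilon> (Esub t e1) / tau_edge p t e1 = sum \<epsilon> (Esub t e2) / tau_edge p t e2)"

definition eps_star :: "real \<Rightarrow> btree \<Rightarrow> vtx \<Rightarrow> real" where
  "eps_star p t = (THE \<epsilon>. is_equal_branching p t \<epsilon>)"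

(* history: for each stage, the set of active edges observed and the searcher's
   position after that stage's move *)
type_synonym hist = "(vtx set \<times> vtx) list"

(* behaviour strategy of the searcher: given the history and the currently active
   edges, a distribution over her next position (staying = waiting) *)
type_synonym strategy = "hist \<Rightarrow> vtx set \<Rightarrow> vtx pmf"

definition positions :: "hist \<Rightarrow> vtx list" where
  "positions h = [] # map snd h"

definition pos :: "hist \<Rightarrow> vtx" where
  "pos h = last (positions h)"

definition traversed :: "hist \<Rightarrow> vtx set" where
  "traversed h = {e. e \<noteq> [] \<and> (\<exists>i < length h.
      {positions h ! i, positions h ! Suc i} = {e, butlast e})}"

definition act_pmf :: "btree \<Rightarrow> real \<Rightarrow> vtx set pmf" where
  "act_pmf t p = map_pmf (\<lambda>f. {e. f e}) (Pi_pmf (edges t) False (\<lambda>_. bernoulli_pmf p))"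

primrec hist_dist :: "btree \<Rightarrow> real \<Rightarrow> strategy \<Rightarrow> nat \<Rightarrow> hist pmf" where
  "hist_dist t p \<sigma> 0 = return_pmf []"
| "hist_dist t p \<sigma> (Suc n) =
     bind_pmf (hist_dist t p \<sigma> n) (\<lambda>h. bind_pmf (act_pmf t p)
        (\<lambda>A. map_pmf (\<lambda>x. h @ [(A, x)]) (\<sigma> h A)))"

definition dfs_moves :: "btree \<Rightarrow> vtx \<Rightarrow> vtx set \<Rightarrow> vtx set \<Rightarrow> vtx set" where
  "dfs_moves t v S A =
    (let U = children t v - S in
     if U \<inter> A \<noteq> {} then U \<inter> A
     else if U \<noteq> {} then {v}
     else if v \<noteq> [] \<and> v \<in> A then {butlast v}
     else {v})"

definition is_dfs :: "btree \<Rightarrow> strategy \<Rightarrow> bool" where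
  "is_dfs t \<sigma> \<longleftrightarrow> (\<forall>h A. set_pmf (\<sigma> h A) \<subseteq> dfs_moves t (pos h) (traversed h) A)"

(* expected first traversal time of edge e: E[T_e] = sum_{k>=0} P(T_e > k),
   where stage k (k = 1,2,...) ends at time k *)
definition exp_time :: "btree \<Rightarrow> real \<Rightarrow> strategy \<Rightarrow> vtx \<Rightarrow> ennreal" where
  "exp_time t p \<sigma> e =
     (\<Sum>k. ennreal (measure_pmf.prob (hist_dist t p \<sigma> k) {h. e \<notin> traversed h}))"

definition payoff :: "btree \<Rightarrow> real \<Rightarrow> (vtx \<Rightarrow> real) \<Rightarrow> strategy \<Rightarrow> ennreal" where
  "payoff t p \<epsilon> \<sigma> = (\<Sum>e\<in>edges t. ennreal (\<epsilon> e) * exp_time t p \<sigma> e)"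

end

theory Submission
  imports Defs
begin


lemma nil_verts[simp]: "[] \<in> verts t"
  by (cases t) auto

lemma finite_verts[simp]: "finite (verts t)"
  by (induction t) auto

lemma cons_verts_Leaf[simp]: "d # w \<notin> verts Leaf" by simp
lemma cons_verts_Node1[simp]: "d # w \<in> verts (Node1 s) \<longleftrightarrow> d = 0 \<and> w \<in> verts s" by auto
lemma cons_verts_Node2[simp]: "d # w \<in> verts (Node2 l r) \<longleftrightarrow> (d = 0 \<and> w \<in> verts l) \<or> (d = 1 \<and> w \<in> verts r)" by auto

declare verts.simps(2,3)[simp del]

lemma snoc_verts: "v @ [d] \<in> verts t \<Longrightarrow> v \<in> verts t \<and> d \<le> 1"
proof (induction t arbitrary: v)
  case Leaf then show ?case by (cases v) auto
next
  case (Node1 s) then show ?case by (cases v) auto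
next
  case (Node2 l r) then show ?case
    apply (cases v) apply (auto simp: verts.simps) done
qed

definition dr :: "nat \<Rightarrow> vtx set \<Rightarrow> vtx set" where "dr d S = {w. d # w \<in> S}"

lemma dr_mem[simp]: "w \<in> dr d S \<longleftrightarrow> d # w \<in> S" by (simp add: dr_def)
lemma dr_insert_same[simp]: "dr d (insert (d # w) S) = insert w (dr d S)" by (auto simp: dr_def)
lemma dr_insert_other[simp]: "d \<noteq> d' \<Longrightarrow> dr d (insert (d' # w) S) = dr d S" by (auto simp: dr_def)

definition fd :: "btree \<Rightarrow> nat \<Rightarrow> vtx set \<Rightarrow> bool" where
  "fd s d S \<longleftrightarrow> (\<forall>w\<in>verts s. d # w \<notin> S) \<or> (\<forall>w\<in>verts s. d # w \<in> S)"

fun dinv :: "btree \<Rightarrow> vtx \<Rightarrow> vtx set \<Rightarrow> bool" where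
  "dinv Leaf v S = (v = [])"
| "dinv (Node1 s) [] S = fd s 0 S"
| "dinv (Node1 s) (0 # v) S = ([0] \<in> S \<and> dinv s v (dr 0 S))"
| "dinv (Node2 l r) [] S = (fd l 0 S \<and> fd r 1 S)"
| "dinv (Node2 l r) (0 # v) S = ([0] \<in> S \<and> dinv l v (dr 0 S) \<and> fd r 1 S)"
| "dinv (Node2 l r) (Suc 0 # v) S = ([1] \<in> S \<and> dinv r v (dr 1 S) \<and> fd l 0 S)"
| "dinv _ _ _ = False"

definition te :: "real \<Rightarrow> btree \<Rightarrow> real" where "te p s = tau p s + 2 / p"
definition qq :: "real \<Rightarrow> real" where "qq p = 1 - (1 - p)^2"
definition wl :: "real \<Rightarrow> btree \<Rightarrow> btree \<Rightarrow> real" where "wl p l r = te p l / (te p l + te p r)"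
definition wr :: "real \<Rightarrow> btree \<Rightarrow> btree \<Rightarrow> real" where "wr p l r = te p r / (te p l + te p r)"

fun X :: "real \<Rightarrow> btree \<Rightarrow> vtx \<Rightarrow> vtx set \<Rightarrow> real" where
  "X p Leaf v S = 0"
| "X p (Node1 s) [] S = (if [0] \<in> S then 0 else te p s)"
| "X p (Node1 s) (0 # v) S = X p s v (dr 0 S) + 1 / p"
| "X p (Node2 l r) [] S = (if [0] \<in> S then (if [1] \<in> S then 0 else te p r)
      else (if [1] \<in> S then te p l else tau p (Node2 l r)))"
| "X p (Node2 l r) (0 # v) S = X p l v (dr 0 S) + 1 / p + (if [1] \<in> S then 0 else te p r)"
| "X p (Node2 l r) (Suc 0 # v) S = X p r v (dr 1 S) + 1 / p + (if [0] \<in> S then 0 else te p l)"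
| "X p _ _ _ = 0"

fun G :: "real \<Rightarrow> btree \<Rightarrow> real" where
  "G p Leaf = 0"
| "G p (Node1 s) = 1 / p + G p s"
| "G p (Node2 l r) = 1 / qq p - 1 / p + wl p l r * (1 / p + G p l) + wr p l r * (1 / p + G p r)
     + wr p l r * te p l"

fun C :: "real \<Rightarrow> btree \<Rightarrow> vtx \<Rightarrow> vtx set \<Rightarrow> real" where
  "C p Leaf v S = 0"
| "C p (Node1 s) [] S = (if [0] \<in> S then 0 else 1 / p + G p s)"
| "C p (Node1 s) (0 # v) S = C p s v (dr 0 S)"
| "C p (Node2 l r) [] S = (if [0] \<in> S then (if [1] \<in> S then 0 else wr p l r * (1 / p + G p r))
      else (if [1] \<in> S then wl p l r * (1 / p + G p l) else G p (Node2 l r)))"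
| "C p (Node2 l r) (0 # v) S = wl p l r * C p l v (dr 0 S)
      + (if [1] \<in> S then 0 else wr p l r * (X p l v (dr 0 S) + 2 / p + G p r))"
| "C p (Node2 l r) (Suc 0 # v) S = wr p l r * C p r v (dr 1 S)
      + (if [0] \<in> S then 0 else wl p l r * (X p r v (dr 1 S) + 2 / p + G p l))"
| "C p _ _ _ = 0"

fun Rn :: "real \<Rightarrow> btree \<Rightarrow> vtx set \<Rightarrow> real" where
  "Rn p Leaf S = 0"
| "Rn p (Node1 s) S = (if s = Leaf \<and> [0] \<notin> S then 1 else 0) + Rn p s (dr 0 S)"
| "Rn p (Node2 l r) S = wl p l r * ((if l = Leaf \<and> [0] \<notin> S then 1 else 0) + Rn p l (dr 0 S))
     + wr p l r * ((if r = Leaf \<and> [1] \<notin> S then 1 else 0) + Rn p r (dr 1 S))"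

lemma qq_pos: "0 < p \<Longrightarrow> p \<le> 1 \<Longrightarrow> 0 < qq p"
proof -
  assume a: "0 < p" "p \<le> 1"
  have "(1-p)*(1-p) \<le> 1*(1-p)" by (rule mult_right_mono) (use a in auto)
  then have "(1-p)*(1-p) \<le> 1-p" by simp
  then show ?thesis unfolding qq_def power2_eq_square using a by linarith
qed

lemma tau_nonneg: "0 < p \<Longrightarrow> p \<le> 1 \<Longrightarrow> 0 \<le> tau p t"
proof (induction t)
  case (Node2 l r)
  have "0 < 1 / qq p" using qq_pos[OF Node2.prems] by simp
  moreover have "0 < 3 / p" using Node2.prems by simp
  ultimately show ?case using Node2 by (simp add: qq_def[symmetric])
qed auto

lemma te_pos: "0 < p \<Longrightarrow> p \<le> 1 \<Longrightarrow> 0 < te p s"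
  using tau_nonneg[of p s] unfolding te_def by (simp add: add_nonneg_pos)

lemma w_facts: assumes "0 < p" "p \<le> 1"
  shows "0 < wl p l r" "0 < wr p l r" "wl p l r + wr p l r = 1" "wr p l r * te p l = wl p l r * te p r"
proof -
  have a: "0 < te p l" "0 < te p r" using te_pos[OF assms] by auto
  then have b: "te p l + te p r \<noteq> 0" by linarith
  show "0 < wl p l r" "0 < wr p l r" using a by (auto simp: wl_def wr_def)
  show "wl p l r + wr p l r = 1" using b by (simp add: wl_def wr_def add_divide_distrib[symmetric])
  show "wr p l r * te p l = wl p l r * te p r" unfolding wl_def wr_def by (simp add: ac_simps)
qed


lemma edges_iff: "w \<in> edges s \<longleftrightarrow> w \<in> verts s \<and> w \<noteq> []"
  by (auto simp: edges_def)

lemma w_sum: "0 < p \<Longrightarrow> p \<le> 1 \<Longrightarrow> wl p l r * x + wr p l r * x = x"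
  using w_facts(3)[of p l r] by (metis distrib_right mult_1)

lemma fresh_vals:
  assumes p: "0 < p" "p \<le> 1" and f: "\<forall>w\<in>edges s. w \<notin> S"
  shows "X p s [] S = tau p s \<and> C p s [] S = G p s \<and> Rn p s S = (if s = Leaf then 0 else 1)"
  using f
proof (induction s arbitrary: S)
  case Leaf then show ?case by simp
next
  case (Node1 s)
  have "[0] \<notin> S" using Node1.prems by (auto simp: edges_iff)
  moreover have "\<forall>w\<in>edges s. w \<notin> dr 0 S" using Node1.prems by (auto simp: edges_iff)
  ultimately show ?case using Node1.IH[of "dr 0 S"] by (simp add: te_def)
next
  case (Node2 l r)
  have "[0] \<notin> S" "[1] \<notin> S" using Node2.prems by (auto simp: edges_iff)
  moreover have "\<forall>w\<in>edges l. w \<notin> dr 0 S" "\<forall>w\<in>edges r. w \<notin> dr 1 S"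
    using Node2.prems by (auto simp: edges_iff)
  ultimately show ?case using Node2.IH(1)[of "dr 0 S"] Node2.IH(2)[of "dr 1 S"] w_facts(3)[OF p]
    by simp
qed

lemma done_vals:
  assumes f: "\<forall>w\<in>edges s. w \<in> S"
  shows "X p s [] S = 0 \<and> C p s [] S = 0 \<and> Rn p s S = 0"
  using f
proof (induction s arbitrary: S)
  case Leaf then show ?case by simp
next
  case (Node1 s)
  have "[0] \<in> S" using Node1.prems by (auto simp: edges_iff)
  moreover have "\<forall>w\<in>edges s. w \<in> dr 0 S" using Node1.prems by (auto simp: edges_iff)
  ultimately show ?case using Node1.IH[of "dr 0 S"] by simp
next
  case (Node2 l r)
  have "[0] \<in> S" "[1] \<in> S" using Node2.prems by (auto simp: edges_iff)
  moreover have "\<forall>w\<in>edges l. w \<in> dr 0 S" "\<forall>w\<in>edges r. w \<in> dr 1 S"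
    using Node2.prems by (auto simp: edges_iff)
  ultimately show ?case using Node2.IH(1)[of "dr 0 S"] Node2.IH(2)[of "dr 1 S"] by simp
qed

lemma fd_in: "fd s d S \<Longrightarrow> [d] \<in> S \<Longrightarrow> \<forall>w\<in>edges s. w \<in> dr d S"
  unfolding fd_def by (auto simp: edges_iff)
lemma fd_notin: "fd s d S \<Longrightarrow> [d] \<notin> S \<Longrightarrow> \<forall>w\<in>edges s. w \<notin> dr d S"
  unfolding fd_def by (auto simp: edges_iff)

lemma RnE_fd:
  assumes p: "0 < p" "p \<le> 1" and "fd s d S"
  shows "(if s = Leaf \<and> [d] \<notin> S then 1 else 0) + Rn p s (dr d S) = (if [d] \<in> S then 0 else 1)"
proof (cases "[d] \<in> S")
  case True then show ?thesis using done_vals[OF fd_in[OF assms(3) True]] by simp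
next
  case False then show ?thesis using fresh_vals[OF p fd_notin[OF assms(3) False]] by simp
qed

lemma fd_ins_other[simp]: "d \<noteq> d' \<Longrightarrow> fd s d (insert (d' # w) S) = fd s d S"
  unfolding fd_def by auto

lemma fresh_inv: "\<forall>w\<in>edges s. w \<notin> S \<Longrightarrow> dinv s [] S"
  by (cases s) (auto simp: fd_def edges_iff)

lemma inv_init: "dinv t [] {}"
  using fresh_inv by auto

lemma fd_in': "fd s d S \<Longrightarrow> [d] \<in> S \<Longrightarrow> \<forall>w\<in>verts s. d # w \<in> S"
  unfolding fd_def using nil_verts by blast

lemma root_done: "dinv s [] S \<Longrightarrow> \<forall>d. [d] \<in> verts s \<longrightarrow> [d] \<in> S \<Longrightarrow> \<forall>w\<in>edges s. w \<in> S"
proof (cases s)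
  case (Node1 x)
  assume a: "dinv s [] S" "\<forall>d. [d] \<in> verts s \<longrightarrow> [d] \<in> S"
  then have "[0] \<in> S" using Node1 by auto
  then have "\<forall>w\<in>verts x. 0 # w \<in> S" using a Node1 fd_in' by auto
  then show ?thesis using Node1 by (auto simp: edges_iff neq_Nil_conv)
next
  case (Node2 l r)
  assume a: "dinv s [] S" "\<forall>d. [d] \<in> verts s \<longrightarrow> [d] \<in> S"
  then have "[0] \<in> S" "[1] \<in> S" using Node2 by auto
  then have "\<forall>w\<in>verts l. 0 # w \<in> S" "\<forall>w\<in>verts r. 1 # w \<in> S" using a Node2 fd_in' by auto
  then show ?thesis using Node2 by (auto simp: edges_iff neq_Nil_conv)
qed (auto simp: edges_iff)

lemma dinv_mem: "dinv t v S \<Longrightarrow> v \<in> verts t \<and> (v \<noteq> [] \<longrightarrow> v \<in> S)"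
proof (induction t arbitrary: v S)
  case Leaf then show ?case by simp
next
  case (Node1 s)
  show ?case
  proof (cases v)
    case (Cons a v')
    then have "a = 0" "[0] \<in> S" "dinv s v' (dr 0 S)" using Node1.prems by (cases a; auto)+
    then show ?thesis using Node1.IH[of v' "dr 0 S"] Cons by (cases v') auto
  qed simp
next
  case (Node2 l r)
  show ?case
  proof (cases v)
    case (Cons a v')
    show ?thesis
    proof (cases a)
      case 0
      then have "[0] \<in> S" "dinv l v' (dr 0 S)" using Node2.prems Cons by auto
      then show ?thesis using Node2.IH(1)[of v' "dr 0 S"] Cons 0 by (cases v') auto
    next
      case (Suc n)
      then have n: "n = 0" using Node2.prems Cons by (cases n) auto
      then have "[1] \<in> S" "dinv r v' (dr 1 S)" using Node2.prems Cons Suc by auto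
      then show ?thesis using Node2.IH(2)[of v' "dr 1 S"] Cons Suc n by (cases v') auto
    qed
  qed simp
qed


lemma dr_ins_nil: "dr d (insert [d] S) = insert [] (dr d S)"
  using dr_insert_same[of d "[]" S] by simp

lemma fresh_ins_nil: "\<forall>w\<in>edges s. w \<notin> S \<Longrightarrow> \<forall>w\<in>edges s. w \<notin> insert [] S"
  by (auto simp: edges_iff)

lemma Rn_N2_fd: "0 < p \<Longrightarrow> p \<le> 1 \<Longrightarrow> fd l 0 S \<Longrightarrow> fd r 1 S \<Longrightarrow>
  Rn p (Node2 l r) S = wl p l r * (if [0] \<in> S then 0 else 1) + wr p l r * (if [1] \<in> S then 0 else 1)"
  using RnE_fd[of p l 0 S] RnE_fd[of p r 1 S] by simp

lemma Rn_N2_l: "0 < p \<Longrightarrow> p \<le> 1 \<Longrightarrow> [0] \<in> S \<Longrightarrow> fd r 1 S \<Longrightarrow>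
  Rn p (Node2 l r) S = wl p l r * Rn p l (dr 0 S) + wr p l r * (if [1] \<in> S then 0 else 1)"
  using RnE_fd[of p r 1 S] by simp

lemma Rn_N2_r: "0 < p \<Longrightarrow> p \<le> 1 \<Longrightarrow> [1] \<in> S \<Longrightarrow> fd l 0 S \<Longrightarrow>
  Rn p (Node2 l r) S = wl p l r * (if [0] \<in> S then 0 else 1) + wr p l r * Rn p r (dr 1 S)"
  using RnE_fd[of p l 0 S] by simp

lemma Rn_fd: "0 < p \<Longrightarrow> p \<le> 1 \<Longrightarrow> fd s d S \<Longrightarrow> Rn p s (dr d S) = (if [d] \<in> S \<or> s = Leaf then 0 else 1)"
  using done_vals[OF fd_in, of s d S p] fresh_vals[OF _ _ fd_notin, of p s d S] by auto

lemma tau_N2: "tau p (Node2 l r) = tau p l + tau p r + 3 / p + 1 / qq p"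
  by (simp add: qq_def)

lemma down2:
  assumes p: "0 < p" "p \<le> 1"
  shows "dinv t v S \<Longrightarrow> v @ [0] \<in> verts t \<Longrightarrow> v @ [0] \<notin> S \<Longrightarrow> v @ [1] \<in> verts t \<Longrightarrow> v @ [1] \<notin> S
    \<Longrightarrow> d \<le> 1 \<Longrightarrow>
    X p t (v @ [d]) (insert (v @ [d]) S) = X p t v S - 1 / qq p \<and>
    C p t (v @ [d]) (insert (v @ [d]) S) = C p t v S - Rn p t S / qq p"
proof (induction t arbitrary: v S)
  case Leaf then show ?case by simp
next
  case (Node1 s)
  show ?case
  proof (cases v)
    case Nil then show ?thesis using Node1.prems by simp
  next
    case (Cons a v')
    then have a: "a = 0" "[0] \<in> S" "dinv s v' (dr 0 S)" using Node1.prems by (cases a; auto)+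
    have "X p s (v' @ [d]) (insert (v' @ [d]) (dr 0 S)) = X p s v' (dr 0 S) - 1 / qq p \<and>
      C p s (v' @ [d]) (insert (v' @ [d]) (dr 0 S)) = C p s v' (dr 0 S) - Rn p s (dr 0 S) / qq p"
      using Node1.IH[of v' "dr 0 S"] Node1.prems a Cons by simp
    then show ?thesis using a Cons by simp
  qed
next
  case (Node2 l r)
  show ?case
  proof (cases v)
    case Nil
    then have f: "[0] \<notin> S" "[1] \<notin> S" "fd l 0 S" "fd r 1 S" using Node2.prems by auto
    have fl: "\<forall>w\<in>edges l. w \<notin> insert [] (dr 0 S)" using fresh_ins_nil fd_notin f by blast
    have fr: "\<forall>w\<in>edges r. w \<notin> insert [] (dr 1 S)" using fresh_ins_nil fd_notin f by blast
    note vl = fresh_vals[OF p fl] and vr = fresh_vals[OF p fr]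
    have R: "Rn p (Node2 l r) S = 1" using Rn_N2_fd[OF p f(3,4)] f w_facts(3)[OF p] by simp
    have ws: "wl p l r + wr p l r = 1" "wr p l r * te p l = wl p l r * te p r" using w_facts[OF p] by auto
    show ?thesis
    proof (cases d)
      case 0
      have "[1] \<notin> insert [0] S" using f by auto
      have wr1: "wr p l r = 1 - wl p l r" using ws by simp
      show ?thesis using Nil 0 f vl R ws(2) dr_ins_nil[of 0 S] \<open>[1] \<notin> insert [0] S\<close>
        by (simp add: qq_def te_def wr1 algebra_simps add_divide_distrib diff_divide_distrib)
    next
      case (Suc n)
      then have "d = 1" using Node2.prems by simp
      moreover have "[0] \<notin> insert [1] S" using f by auto
      moreover have c1: "C p (Node2 l r) [1] (insert [1] S) = wr p l r * G p r + wl p l r * te p r + wl p l r * G p l"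
        using f vr dr_ins_nil[of 1 S] \<open>[0] \<notin> insert [1] S\<close> by (simp add: te_def algebra_simps)
      moreover have c0: "C p (Node2 l r) [] S = G p (Node2 l r)" using f by simp
      moreover have g: "G p (Node2 l r) = 1 / qq p + wl p l r * G p l + wr p l r * G p r + wr p l r * te p l"
        using w_sum[OF p, of l r "1/p"] by (simp add: algebra_simps)
      moreover have "X p (Node2 l r) [1] (insert [1] S) = X p (Node2 l r) [] S - 1 / qq p"
        using f vr dr_ins_nil[of 1 S] \<open>[0] \<notin> insert [1] S\<close> by (simp add: qq_def te_def algebra_simps)
      ultimately show ?thesis using Nil R ws(2) by simp
    qed
  next
    case (Cons a v')
    show ?thesis
    proof (cases a)
      case 0
      then have a: "[0] \<in> S" "dinv l v' (dr 0 S)" "fd r 1 S" using Node2.prems Cons by auto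
      have IH: "X p l (v' @ [d]) (insert (v' @ [d]) (dr 0 S)) = X p l v' (dr 0 S) - 1 / qq p \<and>
        C p l (v' @ [d]) (insert (v' @ [d]) (dr 0 S)) = C p l v' (dr 0 S) - Rn p l (dr 0 S) / qq p"
        using Node2.IH(1)[of v' "dr 0 S"] Node2.prems a Cons 0 by simp
      have rr: "Rn p r (dr (Suc 0) S) = (if [Suc 0] \<in> S \<or> r = Leaf then 0 else 1)"
        using Rn_fd[OF p a(3)] by simp
      have "[1] \<in> insert (0 # v' @ [d]) S \<longleftrightarrow> [1] \<in> S" by auto
      then show ?thesis using a Cons 0
        by (cases "[1] \<in> S") (simp_all add: IH[THEN conjunct1] IH[THEN conjunct2] rr
          algebra_simps add_divide_distrib diff_divide_distrib)
    next
      case (Suc n)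
      then have n: "n = 0" using Node2.prems Cons by (cases n) auto
      then have a: "[1] \<in> S" "dinv r v' (dr 1 S)" "fd l 0 S" using Node2.prems Cons Suc by auto
      have IH: "X p r (v' @ [d]) (insert (v' @ [d]) (dr (Suc 0) S)) = X p r v' (dr (Suc 0) S) - 1 / qq p \<and>
        C p r (v' @ [d]) (insert (v' @ [d]) (dr (Suc 0) S)) = C p r v' (dr (Suc 0) S) - Rn p r (dr (Suc 0) S) / qq p"
        using Node2.IH(2)[of v' "dr (Suc 0) S"] Node2.prems a Cons Suc n by simp
      have rr: "Rn p l (dr 0 S) = (if [0] \<in> S \<or> l = Leaf then 0 else 1)"
        using Rn_fd[OF p a(3)] by simp
      have "[0] \<in> insert (1 # v' @ [d]) S \<longleftrightarrow> [0] \<in> S" by auto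
      then show ?thesis using a Cons Suc n
        by (cases "[0] \<in> S") (simp_all add: IH[THEN conjunct1] IH[THEN conjunct2] rr
          algebra_simps add_divide_distrib diff_divide_distrib)
    qed
  qed
qed


lemma down1:
  assumes p: "0 < p" "p \<le> 1"
  shows "dinv t v S \<Longrightarrow> v @ [d] \<in> verts t \<Longrightarrow> v @ [d] \<notin> S \<Longrightarrow>
    (\<forall>d'. d' \<noteq> d \<longrightarrow> v @ [d'] \<in> verts t \<longrightarrow> v @ [d'] \<in> S) \<Longrightarrow>
    X p t (v @ [d]) (insert (v @ [d]) S) = X p t v S - 1 / p \<and>
    C p t (v @ [d]) (insert (v @ [d]) S) = C p t v S - Rn p t S / p"
proof (induction t arbitrary: v S)
  case Leaf then show ?case by simp
next
  case (Node1 s)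
  show ?case
  proof (cases v)
    case Nil
    then have d: "d = 0" "[0] \<notin> S" "fd s 0 S" using Node1.prems by auto
    have fl: "\<forall>w\<in>edges s. w \<notin> insert [] (dr 0 S)" using fresh_ins_nil fd_notin d by blast
    note vl = fresh_vals[OF p fl]
    have rr: "Rn p s (dr 0 S) = (if [0] \<in> S \<or> s = Leaf then 0 else 1)"
      using Rn_fd[OF p d(3)] by simp
    show ?thesis using Nil d vl rr dr_ins_nil[of 0 S] by (simp add: te_def)
  next
    case (Cons a v')
    then have a: "a = 0" "[0] \<in> S" "dinv s v' (dr 0 S)" using Node1.prems by (cases a; auto)+
    have "X p s (v' @ [d]) (insert (v' @ [d]) (dr 0 S)) = X p s v' (dr 0 S) - 1 / p \<and>
      C p s (v' @ [d]) (insert (v' @ [d]) (dr 0 S)) = C p s v' (dr 0 S) - Rn p s (dr 0 S) / p"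
      using Node1.IH[of v' "dr 0 S"] Node1.prems a Cons by simp
    then show ?thesis using a Cons by simp
  qed
next
  case (Node2 l r)
  show ?case
  proof (cases v)
    case Nil
    have fd: "fd l 0 S" "fd r 1 S" using Node2.prems Nil by auto
    show ?thesis
    proof (cases d)
      case 0
      then have f: "[0] \<notin> S" "[1] \<in> S" using Node2.prems Nil by auto
      have fl: "\<forall>w\<in>edges l. w \<notin> insert [] (dr 0 S)" using fresh_ins_nil fd_notin f fd by blast
      note vl = fresh_vals[OF p fl]
      have rl: "Rn p l (dr 0 S) = (if [0] \<in> S \<or> l = Leaf then 0 else 1)"
        using Rn_fd[OF p fd(1)] by simp
      have rr: "Rn p r (dr (Suc 0) S) = (if [Suc 0] \<in> S \<or> r = Leaf then 0 else 1)"
        using Rn_fd[OF p fd(2)] by simp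
      have "[1] \<in> insert [0] S" using f by auto
      then show ?thesis using Nil 0 f vl rl rr dr_ins_nil[of 0 S]
        by (simp add: te_def algebra_simps add_divide_distrib diff_divide_distrib)
    next
      case (Suc n)
      then have "d = 1" using Node2.prems Nil by (cases n) auto
      then have f: "[1] \<notin> S" "[0] \<in> S" "d = 1" using Node2.prems Nil by auto
      have fr: "\<forall>w\<in>edges r. w \<notin> insert [] (dr 1 S)" using fresh_ins_nil fd_notin f fd by blast
      note vr = fresh_vals[OF p fr]
      have rl: "Rn p l (dr 0 S) = (if [0] \<in> S \<or> l = Leaf then 0 else 1)"
        using Rn_fd[OF p fd(1)] by simp
      have rr: "Rn p r (dr (Suc 0) S) = (if [Suc 0] \<in> S \<or> r = Leaf then 0 else 1)"
        using Rn_fd[OF p fd(2)] by simp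
      have "[0] \<in> insert [1] S" using f by auto
      then show ?thesis using Nil f vr rl rr dr_ins_nil[of 1 S]
        by (simp add: te_def algebra_simps add_divide_distrib diff_divide_distrib)
    qed
  next
    case (Cons a v')
    show ?thesis
    proof (cases a)
      case 0
      then have a: "[0] \<in> S" "dinv l v' (dr 0 S)" "fd r 1 S" using Node2.prems Cons by auto
      have IH: "X p l (v' @ [d]) (insert (v' @ [d]) (dr 0 S)) = X p l v' (dr 0 S) - 1 / p \<and>
        C p l (v' @ [d]) (insert (v' @ [d]) (dr 0 S)) = C p l v' (dr 0 S) - Rn p l (dr 0 S) / p"
        using Node2.IH(1)[of v' "dr 0 S"] Node2.prems a Cons 0 by simp
      have rr: "Rn p r (dr (Suc 0) S) = (if [Suc 0] \<in> S \<or> r = Leaf then 0 else 1)"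
        using Rn_fd[OF p a(3)] by simp
      have "[1] \<in> insert (0 # v' @ [d]) S \<longleftrightarrow> [1] \<in> S" by auto
      then show ?thesis using a Cons 0
        by (cases "[1] \<in> S") (simp_all add: IH[THEN conjunct1] IH[THEN conjunct2] rr
          algebra_simps add_divide_distrib diff_divide_distrib)
    next
      case (Suc n)
      then have n: "n = 0" using Node2.prems Cons by (cases n) auto
      then have a: "[1] \<in> S" "dinv r v' (dr 1 S)" "fd l 0 S" using Node2.prems Cons Suc by auto
      have IH: "X p r (v' @ [d]) (insert (v' @ [d]) (dr (Suc 0) S)) = X p r v' (dr (Suc 0) S) - 1 / p \<and>
        C p r (v' @ [d]) (insert (v' @ [d]) (dr (Suc 0) S)) = C p r v' (dr (Suc 0) S) - Rn p r (dr (Suc 0) S) / p"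
        using Node2.IH(2)[of v' "dr (Suc 0) S"] Node2.prems a Cons Suc n by simp
      have rr: "Rn p l (dr 0 S) = (if [0] \<in> S \<or> l = Leaf then 0 else 1)"
        using Rn_fd[OF p a(3)] by simp
      have "[0] \<in> insert (1 # v' @ [d]) S \<longleftrightarrow> [0] \<in> S" by auto
      then show ?thesis using a Cons Suc n
        by (cases "[0] \<in> S") (simp_all add: IH[THEN conjunct1] IH[THEN conjunct2] rr
          algebra_simps add_divide_distrib diff_divide_distrib)
    qed
  qed
qed

lemma final_vals:
  "dinv t [] S \<Longrightarrow> \<forall>d. [d] \<in> verts t \<longrightarrow> [d] \<in> S \<Longrightarrow> X p t [] S = 0 \<and> C p t [] S = 0 \<and> Rn p t S = 0"
  using done_vals root_done by blast

lemma up: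
  assumes p: "0 < p" "p \<le> 1"
  shows "dinv t v S \<Longrightarrow> v \<noteq> [] \<Longrightarrow> (\<forall>d. v @ [d] \<in> verts t \<longrightarrow> v @ [d] \<in> S) \<Longrightarrow>
    X p t (butlast v) S = X p t v S - 1 / p \<and>
    C p t (butlast v) S = C p t v S - Rn p t S / p"
proof (induction t arbitrary: v S)
  case Leaf then show ?case by simp
next
  case (Node1 s)
  obtain a v' where Cons: "v = a # v'" using Node1.prems by (cases v) auto
  then have a: "a = 0" "[0] \<in> S" "dinv s v' (dr 0 S)" using Node1.prems by (cases a; auto)+
  show ?case
  proof (cases v')
    case Nil
    have "\<forall>d. [d] \<in> verts s \<longrightarrow> [d] \<in> dr 0 S" using Node1.prems Cons Nil a by auto
    from final_vals[OF _ this, of p] a Nil have "X p s [] (dr 0 S) = 0 \<and> C p s [] (dr 0 S) = 0 \<and> Rn p s (dr 0 S) = 0"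
      by simp
    then show ?thesis using Cons Nil a by simp
  next
    case (Cons b w)
    obtain u where u: "butlast v' = u" by simp
    have bv: "butlast v = 0 # u" using u Cons a \<open>v = a # v'\<close> by simp
    have "X p s u (dr 0 S) = X p s v' (dr 0 S) - 1 / p \<and>
      C p s u (dr 0 S) = C p s v' (dr 0 S) - Rn p s (dr 0 S) / p"
      using Node1.IH[of v' "dr 0 S"] Node1.prems a \<open>v = a # v'\<close> Cons u by simp
    then show ?thesis using a \<open>v = a # v'\<close> unfolding bv by simp
  qed
next
  case (Node2 l r)
  obtain a v' where Cons: "v = a # v'" using Node2.prems by (cases v) auto
  show ?case
  proof (cases a)
    case 0
    then have a: "[0] \<in> S" "dinv l v' (dr 0 S)" "fd r 1 S" using Node2.prems Cons by auto
    have rr: "Rn p r (dr (Suc 0) S) = (if [Suc 0] \<in> S \<or> r = Leaf then 0 else 1)"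
      using Rn_fd[OF p a(3)] by simp
    show ?thesis
    proof (cases v')
      case Nil
      have "\<forall>d. [d] \<in> verts l \<longrightarrow> [d] \<in> dr 0 S" using Node2.prems Cons Nil 0 by auto
      from final_vals[OF _ this, of p] a Nil have "X p l [] (dr 0 S) = 0 \<and> C p l [] (dr 0 S) = 0 \<and> Rn p l (dr 0 S) = 0"
        by simp
      then show ?thesis using Cons Nil a 0 rr
        by (cases "[1] \<in> S") (simp_all add: algebra_simps add_divide_distrib diff_divide_distrib)
    next
      case (Cons b w)
      obtain u where u: "butlast v' = u" by simp
      have bv: "butlast v = 0 # u" using u Cons 0 \<open>v = a # v'\<close> by simp
      have IH: "X p l u (dr 0 S) = X p l v' (dr 0 S) - 1 / p \<and>
        C p l u (dr 0 S) = C p l v' (dr 0 S) - Rn p l (dr 0 S) / p"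
        using Node2.IH(1)[of v' "dr 0 S"] Node2.prems a \<open>v = a # v'\<close> Cons 0 u by simp
      then show ?thesis using a \<open>v = a # v'\<close> 0 unfolding bv
        by (cases "[1] \<in> S") (simp_all add: IH[THEN conjunct1] IH[THEN conjunct2] rr
          algebra_simps add_divide_distrib diff_divide_distrib)
    qed
  next
    case (Suc n)
    then have n: "n = 0" using Node2.prems Cons by (cases n) auto
    then have a: "[1] \<in> S" "dinv r v' (dr (Suc 0) S)" "fd l 0 S" using Node2.prems Cons Suc by auto
    have rr: "Rn p l (dr 0 S) = (if [0] \<in> S \<or> l = Leaf then 0 else 1)"
      using Rn_fd[OF p a(3)] by simp
    show ?thesis
    proof (cases v')
      case Nil
      have "\<forall>d. [d] \<in> verts r \<longrightarrow> [d] \<in> dr (Suc 0) S" using Node2.prems Cons Nil Suc n by auto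
      from final_vals[OF _ this, of p] a Nil have "X p r [] (dr (Suc 0) S) = 0 \<and> C p r [] (dr (Suc 0) S) = 0 \<and> Rn p r (dr (Suc 0) S) = 0"
        by simp
      then show ?thesis using Cons Nil a Suc n rr
        by (cases "[0] \<in> S") (simp_all add: algebra_simps add_divide_distrib diff_divide_distrib)
    next
      case (Cons b w)
      obtain u where u: "butlast v' = u" by simp
      have bv: "butlast v = Suc 0 # u" using u Cons Suc n \<open>v = a # v'\<close> by simp
      have IH: "X p r u (dr (Suc 0) S) = X p r v' (dr (Suc 0) S) - 1 / p \<and>
        C p r u (dr (Suc 0) S) = C p r v' (dr (Suc 0) S) - Rn p r (dr (Suc 0) S) / p"
        using Node2.IH(2)[of v' "dr (Suc 0) S"] Node2.prems a \<open>v = a # v'\<close> Cons Suc n u by simp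
      then show ?thesis using a \<open>v = a # v'\<close> Suc n unfolding bv
        by (cases "[0] \<in> S") (simp_all add: IH[THEN conjunct1] IH[THEN conjunct2] rr
          algebra_simps add_divide_distrib diff_divide_distrib)
    qed
  qed
qed

lemma inv_down: "dinv t v S \<Longrightarrow> v @ [d] \<in> verts t \<Longrightarrow> v @ [d] \<notin> S \<Longrightarrow> dinv t (v @ [d]) (insert (v @ [d]) S)"
proof (induction t arbitrary: v S)
  case Leaf then show ?case by simp
next
  case (Node1 s)
  show ?case
  proof (cases v)
    case Nil
    then have "d = 0" "[0] \<notin> S" "fd s 0 S" using Node1.prems by auto
    then show ?thesis using Nil fresh_inv[OF fresh_ins_nil[OF fd_notin]] dr_ins_nil[of 0 S] by simp
  next
    case (Cons a v')
    then have a: "a = 0" "[0] \<in> S" "dinv s v' (dr 0 S)" using Node1.prems by (cases a; auto)+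
    then show ?thesis using Node1.IH[of v' "dr 0 S"] Node1.prems Cons by simp
  qed
next
  case (Node2 l r)
  show ?case
  proof (cases v)
    case Nil
    have fd: "fd l 0 S" "fd r 1 S" using Node2.prems Nil by auto
    show ?thesis
    proof (cases d)
      case 0
      then show ?thesis using Nil fd Node2.prems fresh_inv[OF fresh_ins_nil[OF fd_notin]] dr_ins_nil[of 0 S] by simp
    next
      case (Suc n)
      then have "d = 1" using Node2.prems Nil by (cases n) auto
      then show ?thesis using Nil fd Node2.prems fresh_inv[OF fresh_ins_nil[OF fd_notin]] dr_ins_nil[of 1 S] by simp
    qed
  next
    case (Cons a v')
    show ?thesis
    proof (cases a)
      case 0
      then show ?thesis using Node2.IH(1)[of v' "dr 0 S"] Node2.prems Cons by auto
    next
      case (Suc n)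
      then have n: "n = 0" using Node2.prems Cons by (cases n) auto
      then show ?thesis using Node2.IH(2)[of v' "dr (Suc 0) S"] Node2.prems Cons Suc by auto
    qed
  qed
qed

lemma inv_up: "dinv t v S \<Longrightarrow> v \<noteq> [] \<Longrightarrow> (\<forall>d. v @ [d] \<in> verts t \<longrightarrow> v @ [d] \<in> S) \<Longrightarrow> dinv t (butlast v) S"
proof (induction t arbitrary: v S)
  case Leaf then show ?case by simp
next
  case (Node1 s)
  obtain a v' where Cons: "v = a # v'" using Node1.prems by (cases v) auto
  then have a: "a = 0" "[0] \<in> S" "dinv s v' (dr 0 S)" using Node1.prems by (cases a; auto)+
  show ?case
  proof (cases v')
    case Nil
    have "\<forall>d. [d] \<in> verts s \<longrightarrow> [d] \<in> dr 0 S" using Node1.prems Cons Nil a by auto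
    then have "\<forall>w\<in>edges s. w \<in> dr 0 S" using root_done[of s "dr 0 S"] a Nil by simp
    then have "fd s 0 S" unfolding fd_def using a(2) by (auto simp: edges_iff)
    then show ?thesis using Cons Nil by simp
  next
    case (Cons b w)
    then show ?thesis using Node1.IH[of v' "dr 0 S"] Node1.prems a \<open>v = a # v'\<close> by simp
  qed
next
  case (Node2 l r)
  obtain a v' where Cons: "v = a # v'" using Node2.prems by (cases v) auto
  show ?case
  proof (cases a)
    case 0
    then have a: "[0] \<in> S" "dinv l v' (dr 0 S)" "fd r 1 S" using Node2.prems Cons by auto
    show ?thesis
    proof (cases v')
      case Nil
      have "\<forall>d. [d] \<in> verts l \<longrightarrow> [d] \<in> dr 0 S" using Node2.prems Cons Nil 0 by auto
      then have "\<forall>w\<in>edges l. w \<in> dr 0 S" using root_done[of l "dr 0 S"] a Nil by simp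
      then have "fd l 0 S" unfolding fd_def using a(1) by (auto simp: edges_iff)
      then show ?thesis using Cons Nil a 0 by simp
    next
      case (Cons b w)
      then show ?thesis using Node2.IH(1)[of v' "dr 0 S"] Node2.prems a \<open>v = a # v'\<close> 0 by simp
    qed
  next
    case (Suc n)
    then have n: "n = 0" using Node2.prems Cons by (cases n) auto
    then have a: "[1] \<in> S" "dinv r v' (dr (Suc 0) S)" "fd l 0 S" using Node2.prems Cons Suc by auto
    show ?thesis
    proof (cases v')
      case Nil
      have "\<forall>d. [d] \<in> verts r \<longrightarrow> [d] \<in> dr (Suc 0) S" using Node2.prems Cons Nil Suc n by auto
      then have "\<forall>w\<in>edges r. w \<in> dr (Suc 0) S" using root_done[of r "dr (Suc 0) S"] a Nil by simp
      then have "fd r 1 S" unfolding fd_def using a(1) by (auto simp: edges_iff)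
      then show ?thesis using Cons Nil a Suc n by simp
    next
      case (Cons b w)
      then show ?thesis using Node2.IH(2)[of v' "dr (Suc 0) S"] Node2.prems a \<open>v = a # v'\<close> Suc n by simp
    qed
  qed
qed


lemma Rn_bounds: "0 < p \<Longrightarrow> p \<le> 1 \<Longrightarrow> 0 \<le> Rn p t S \<and> Rn p t S \<le> 1"
proof (induction t arbitrary: S)
  case Leaf then show ?case by simp
next
  case (Node1 s)
  then show ?case using Node1.IH[of "dr 0 S"] by (cases "s = Leaf") auto
next
  case (Node2 l r)
  define a where "a = (if l = Leaf \<and> [0] \<notin> S then 1 else 0) + Rn p l (dr 0 S)"
  define b where "b = (if r = Leaf \<and> [1] \<notin> S then 1 else 0) + Rn p r (dr 1 S)"
  have ab: "0 \<le> a" "a \<le> 1" "0 \<le> b" "b \<le> 1" using Node2.IH(1)[OF Node2.prems, of "dr 0 S"]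
     Node2.IH(2)[OF Node2.prems, of "dr 1 S"] unfolding a_def b_def by auto
  have w: "0 < wl p l r" "0 < wr p l r" "wl p l r + wr p l r = 1" using w_facts[OF Node2.prems] by auto
  have "wl p l r * a \<le> wl p l r * 1" using mult_left_mono[OF ab(2)] w by simp
  moreover have "wr p l r * b \<le> wr p l r * 1" using mult_left_mono[OF ab(4)] w by simp
  moreover have "0 \<le> wl p l r * a" "0 \<le> wr p l r * b" using w ab by auto
  moreover have "Rn p (Node2 l r) S = wl p l r * a + wr p l r * b" by (simp add: a_def b_def)
  ultimately show ?case using w(3) by linarith
qed

lemma G_nonneg: "0 < p \<Longrightarrow> p \<le> 1 \<Longrightarrow> 0 \<le> G p t"
proof (induction t)
  case (Node2 l r)
  have w: "0 < wl p l r" "0 < wr p l r" using w_facts[OF Node2.prems] by auto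
  have "G p (Node2 l r) = 1 / qq p + wl p l r * G p l + wr p l r * G p r + wr p l r * te p l"
    using w_sum[OF Node2.prems, of l r "1/p"] by (simp add: algebra_simps)
  moreover have "0 < 1 / qq p" using qq_pos[OF Node2.prems] by simp
  moreover have "0 \<le> wl p l r * G p l" "0 \<le> wr p l r * G p r" "0 \<le> wr p l r * te p l"
    using Node2 w te_pos[OF Node2.prems, of l] by auto
  ultimately show ?case by linarith
qed auto

lemma arG: "(a::real) + b = 1 \<Longrightarrow> b*(x + 2/p) = a*(y + 2/p) \<Longrightarrow>
  1/q - 1/p + a*(1/p + (x/2 + L1)) + b*(1/p + (y/2 + L2)) + b*(x + 2/p)
   = (x + y + 3/p + 1/q)/2 + (a*L1 + b*L2 + 1/2 * (1/q - 1/p))"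
  by algebra

lemma G_eq: "0 < p \<Longrightarrow> p \<le> 1 \<Longrightarrow> G p t = tau p t / 2 + Lam p t"
proof (induction t)
  case (Node2 l r)
  have w: "wl p l r + wr p l r = 1" "wr p l r * (tau p l + 2/p) = wl p l r * (tau p r + 2/p)"
    using w_facts[OF Node2.prems] by (auto simp: te_def)
  have L: "Lam p (Node2 l r) = wl p l r * Lam p l + wr p l r * Lam p r + 1/2 * (1 / qq p - 1 / p)"
    by (simp add: wl_def wr_def qq_def te_def)
  show ?case unfolding L using Node2 arG[OF w, of "qq p" "Lam p l" "Lam p r"]
    by (simp add: te_def qq_def)
qed (auto simp: te_def)

fun K :: "real \<Rightarrow> btree \<Rightarrow> real" where
  "K p Leaf = 0"
| "K p (Node1 s) = K p s + 1 / p + G p s"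
| "K p (Node2 l r) = K p l + K p r + te p l + te p r + G p l + G p r + 2 / p + G p (Node2 l r)"

lemma K_nonneg: "0 < p \<Longrightarrow> p \<le> 1 \<Longrightarrow> 0 \<le> K p t"
proof (induction t)
  case (Node1 s) then show ?case using G_nonneg[OF Node1.prems, of s] by simp
next
  case (Node2 l r)
  have "0 \<le> G p (Node2 l r)" by (rule G_nonneg[OF Node2.prems])
  moreover have "0 \<le> G p l" "0 \<le> G p r" by (rule G_nonneg[OF Node2.prems])+
  moreover have "0 < te p l" "0 < te p r" using te_pos[OF Node2.prems] by auto
  moreover have "0 < 2 / p" using Node2.prems by simp
  ultimately show ?case using Node2 by (simp del: G.simps)
qed simp

lemma X_bounds:
  assumes p: "0 < p" "p \<le> 1"
  shows "dinv t v S \<Longrightarrow> 0 \<le> X p t v S \<and> X p t v S \<le> tau p t"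
proof (induction t arbitrary: v S)
  case Leaf then show ?case by simp
next
  case (Node1 s)
  show ?case
  proof (cases v)
    case Nil then show ?thesis using te_pos[OF p, of s] by (simp add: te_def)
  next
    case (Cons a v')
    then have a: "a = 0" "dinv s v' (dr 0 S)" using Node1.prems by (cases a; auto)+
    moreover have "1 / p \<le> 2 / p" "0 \<le> 1 / p" using p by (auto simp: divide_right_mono)
    moreover have "0 \<le> X p s v' (dr 0 S)" "X p s v' (dr 0 S) \<le> tau p s" using Node1.IH[of v' "dr 0 S"] a by auto
    moreover have "X p (Node1 s) v S = X p s v' (dr 0 S) + 1/p" using Cons a by simp
    moreover have "tau p (Node1 s) = tau p s + 2/p" by simp
    ultimately show ?thesis by linarith
  qed
next
  case (Node2 l r)
  have tl: "0 \<le> tau p l" "0 \<le> tau p r" using tau_nonneg[OF p] by auto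
  have q: "0 < 1 / qq p" using qq_pos[OF p] by simp
  have tN: "tau p (Node2 l r) = tau p l + tau p r + 3 / p + 1 / qq p" by (simp add: qq_def)
  have pp: "0 < 1 / p" "1/p \<le> 2/p" "2/p \<le> 3/p" using p by (auto simp: divide_right_mono)
  show ?case
  proof (cases v)
    case Nil then show ?thesis apply (auto simp: te_def) using q pp tl unfolding qq_def by linarith+
  next
    case (Cons a v')
    show ?thesis
    proof (cases a)
      case 0
      then have "dinv l v' (dr 0 S)" using Node2.prems Cons by auto
      then have "0 \<le> X p l v' (dr 0 S) \<and> X p l v' (dr 0 S) \<le> tau p l" using Node2.IH(1)[of v' "dr 0 S"] by simp
      then show ?thesis using Cons 0 apply (auto simp: te_def) using q pp tl unfolding qq_def by linarith+
    next
      case (Suc n)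
      then have n: "n = 0" using Node2.prems Cons by (cases n) auto
      then have "dinv r v' (dr (Suc 0) S)" using Node2.prems Cons Suc by auto
      then have "0 \<le> X p r v' (dr (Suc 0) S) \<and> X p r v' (dr (Suc 0) S) \<le> tau p r" using Node2.IH(2)[of v' "dr (Suc 0) S"] by simp
      then show ?thesis using Cons Suc n apply (auto simp: te_def) using q pp tl unfolding qq_def by linarith+
    qed
  qed
qed


lemma C_bounds:
  assumes p: "0 < p" "p \<le> 1"
  shows "dinv t v S \<Longrightarrow> 0 \<le> C p t v S \<and> C p t v S \<le> K p t * Rn p t S"
proof (induction t arbitrary: v S)
  case Leaf then show ?case by simp
next
  case (Node1 s)
  have Gs: "0 \<le> G p s" "0 \<le> K p s" using G_nonneg[OF p] K_nonneg[OF p] by auto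
  have pp: "0 < 1 / p" using p by simp
  show ?case
  proof (cases v)
    case Nil
    then have fd: "fd s 0 S" using Node1.prems by simp
    have rr: "Rn p s (dr 0 S) = (if [0] \<in> S \<or> s = Leaf then 0 else 1)" using Rn_fd[OF p fd] by simp
    show ?thesis using Nil rr Gs pp by auto
  next
    case (Cons a v')
    then have a: "a = 0" "[0] \<in> S" "dinv s v' (dr 0 S)" using Node1.prems by (cases a; auto)+
    have ih: "0 \<le> C p s v' (dr 0 S)" "C p s v' (dr 0 S) \<le> K p s * Rn p s (dr 0 S)"
      using Node1.IH[OF a(3)] by auto
    have r0: "0 \<le> Rn p s (dr 0 S)" using Rn_bounds[OF p] by auto
    have "K p s * Rn p s (dr 0 S) \<le> (K p s + 1 / p + G p s) * Rn p s (dr 0 S)"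
      using mult_right_mono[OF _ r0, of "K p s" "K p s + 1 / p + G p s"] Gs pp by simp
    then show ?thesis using ih Cons a by simp
  qed
next
  case (Node2 l r)
  have G: "0 \<le> G p l" "0 \<le> G p r" "0 \<le> G p (Node2 l r)" "0 \<le> K p l" "0 \<le> K p r"
    by (rule G_nonneg[OF p] K_nonneg[OF p])+
  have pp: "0 < 1 / p" "0 < 2 / p" "1 / p \<le> 2 / p" using p by (auto simp: divide_right_mono)
  have te: "0 < te p l" "0 < te p r" using te_pos[OF p] by auto
  have w: "0 < wl p l r" "0 < wr p l r" using w_facts[OF p] by auto
  define KK where "KK = K p (Node2 l r)"
  have KK: "KK = K p l + K p r + te p l + te p r + G p l + G p r + 2 / p + G p (Node2 l r)"
    unfolding KK_def by (simp del: G.simps)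
  show ?case
  proof (cases v)
    case Nil
    then have fd: "fd l 0 S" "fd r 1 S" using Node2.prems by auto
    have R: "Rn p (Node2 l r) S = wl p l r * (if [0] \<in> S then 0 else 1) + wr p l r * (if [1] \<in> S then 0 else 1)"
      by (rule Rn_N2_fd[OF p fd])
    have c1: "1 / p + G p l \<le> KK" "1 / p + G p r \<le> KK" "G p (Node2 l r) \<le> KK"
      using KK G pp te by linarith+
    have m1: "wl p l r * (1 / p + G p l) \<le> wl p l r * KK" "wr p l r * (1 / p + G p r) \<le> wr p l r * KK"
      using mult_left_mono c1 w by (auto simp del: G.simps)
    have n1: "0 \<le> wl p l r * (1 / p + G p l)" "0 \<le> wr p l r * (1 / p + G p r)" using w G pp by auto
    have ws: "wl p l r + wr p l r = 1" using w_facts[OF p] by auto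
    have "KK * (wl p l r + wr p l r) = KK" using ws by simp
    then have kk: "KK * wl p l r + KK * wr p l r = KK" by (simp add: algebra_simps)
    show ?thesis unfolding KK_def[symmetric] R using Nil m1 n1 c1 G kk
      by (simp del: G.simps add: algebra_simps)
  next
    case (Cons a v')
    show ?thesis
    proof (cases a)
      case 0
      then have a: "[0] \<in> S" "dinv l v' (dr 0 S)" "fd r 1 S" using Node2.prems Cons by auto
      have rr: "Rn p r (dr (Suc 0) S) = (if [Suc 0] \<in> S \<or> r = Leaf then 0 else 1)"
        using Rn_fd[OF p a(3)] by simp
      have ih: "0 \<le> C p l v' (dr 0 S)" "C p l v' (dr 0 S) \<le> K p l * Rn p l (dr 0 S)"
        using Node2.IH(1)[OF a(2)] by auto
      have xb: "0 \<le> X p l v' (dr 0 S)" "X p l v' (dr 0 S) \<le> tau p l" using X_bounds[OF p a(2)] by auto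
      have r0: "0 \<le> Rn p l (dr 0 S)" using Rn_bounds[OF p] by auto
      have "K p l * Rn p l (dr 0 S) \<le> KK * Rn p l (dr 0 S)"
        using mult_right_mono[OF _ r0, of "K p l" KK] KK G te pp by simp
      then have A: "wl p l r * C p l v' (dr 0 S) \<le> wl p l r * (KK * Rn p l (dr 0 S))"
        using ih w mult_left_mono[of "C p l v' (dr 0 S)" "KK * Rn p l (dr 0 S)" "wl p l r"] by simp
      have A0: "0 \<le> wl p l r * C p l v' (dr 0 S)" using ih w by simp
      have "X p l v' (dr 0 S) + 2 / p + G p r \<le> KK" using xb KK G te pp by (simp add: te_def)
      then have B: "wr p l r * (X p l v' (dr 0 S) + 2 / p + G p r) \<le> wr p l r * KK"
        using w mult_left_mono by (simp del: G.simps)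
      have B0: "0 \<le> wr p l r * (X p l v' (dr 0 S) + 2 / p + G p r)" using w xb pp G by simp
      have R: "Rn p (Node2 l r) S = wl p l r * Rn p l (dr 0 S) + wr p l r * (if [Suc 0] \<in> S then 0 else 1)"
        using Rn_N2_l[OF p a(1) a(3)] by simp
      show ?thesis using Cons 0 a A A0 B B0 unfolding KK_def[symmetric] R
        by (cases "[1] \<in> S") (simp_all del: G.simps Rn.simps add: algebra_simps)
    next
      case (Suc n)
      then have n: "n = 0" using Node2.prems Cons by (cases n) auto
      then have a: "[1] \<in> S" "dinv r v' (dr (Suc 0) S)" "fd l 0 S" using Node2.prems Cons Suc by auto
      have rr: "Rn p l (dr 0 S) = (if [0] \<in> S \<or> l = Leaf then 0 else 1)"
        using Rn_fd[OF p a(3)] by simp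
      have ih: "0 \<le> C p r v' (dr (Suc 0) S)" "C p r v' (dr (Suc 0) S) \<le> K p r * Rn p r (dr (Suc 0) S)"
        using Node2.IH(2)[OF a(2)] by auto
      have xb: "0 \<le> X p r v' (dr (Suc 0) S)" "X p r v' (dr (Suc 0) S) \<le> tau p r" using X_bounds[OF p a(2)] by auto
      have r0: "0 \<le> Rn p r (dr (Suc 0) S)" using Rn_bounds[OF p] by auto
      have "K p r * Rn p r (dr (Suc 0) S) \<le> KK * Rn p r (dr (Suc 0) S)"
        using mult_right_mono[OF _ r0, of "K p r" KK] KK G te pp by simp
      then have A: "wr p l r * C p r v' (dr (Suc 0) S) \<le> wr p l r * (KK * Rn p r (dr (Suc 0) S))"
        using ih w mult_left_mono[of "C p r v' (dr (Suc 0) S)" "KK * Rn p r (dr (Suc 0) S)" "wr p l r"] by simp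
      have A0: "0 \<le> wr p l r * C p r v' (dr (Suc 0) S)" using ih w by simp
      have "X p r v' (dr (Suc 0) S) + 2 / p + G p l \<le> KK" using xb KK G te pp by (simp add: te_def)
      then have B: "wl p l r * (X p r v' (dr (Suc 0) S) + 2 / p + G p l) \<le> wl p l r * KK"
        using w mult_left_mono by (simp del: G.simps)
      have B0: "0 \<le> wl p l r * (X p r v' (dr (Suc 0) S) + 2 / p + G p l)" using w xb pp G by simp
      have R: "Rn p (Node2 l r) S = wl p l r * (if [0] \<in> S then 0 else 1) + wr p l r * Rn p r (dr (Suc 0) S)"
        using Rn_N2_r[OF p _ a(3)] a(1) by simp
      show ?thesis using Cons Suc n a A A0 B B0 unfolding KK_def[symmetric] R
        by (cases "[0] \<in> S") (simp_all del: G.simps Rn.simps add: algebra_simps)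
    qed
  qed
qed


lemma positions_snoc: "positions (h @ [(A, x)]) = positions h @ [x]"
  by (simp add: positions_def)

lemma length_positions[simp]: "length (positions h) = Suc (length h)"
  by (simp add: positions_def)

lemma pos_snoc[simp]: "pos (h @ [(A, x)]) = x"
  by (simp add: pos_def positions_snoc)

lemma pos_nil[simp]: "pos [] = []" by (simp add: pos_def positions_def)
lemma traversed_nil[simp]: "traversed [] = {}" by (simp add: traversed_def)

lemma traversed_snoc:
  "traversed (h @ [(A, x)]) = traversed h \<union> {e. e \<noteq> [] \<and> {pos h, x} = {e, butlast e}}"
proof -
  let ?P = "positions h" and ?Q = "positions (h @ [(A, x)])"
  have Q: "?Q = ?P @ [x]" by (rule positions_snoc)
  have a: "\<And>i. i < length h \<Longrightarrow> ?Q ! i = ?P ! i \<and> ?Q ! Suc i = ?P ! Suc i"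
    unfolding Q by (simp add: nth_append)
  have ne: "?P \<noteq> []" by (simp add: positions_def)
  have l: "last ?P = ?P ! (length ?P - 1)" by (rule last_conv_nth[OF ne])
  have b: "?Q ! length h = pos h" "?Q ! Suc (length h) = x"
    unfolding Q pos_def using l by (simp_all add: nth_append)
  show ?thesis
    unfolding traversed_def
  proof (intro set_eqI iffI)
    fix e assume "e \<in> {e. e \<noteq> [] \<and> (\<exists>i<length (h @ [(A, x)]). {?Q ! i, ?Q ! Suc i} = {e, butlast e})}"
    then obtain i where i: "e \<noteq> []" "i < Suc (length h)" "{?Q ! i, ?Q ! Suc i} = {e, butlast e}" by auto
    show "e \<in> {e. e \<noteq> [] \<and> (\<exists>i<length h. {?P ! i, ?P ! Suc i} = {e, butlast e})} \<union>
      {e. e \<noteq> [] \<and> {pos h, x} = {e, butlast e}}"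
    proof (cases "i < length h")
      case True then show ?thesis using i a by auto
    next
      case False then have "i = length h" using i by simp
      then show ?thesis using i b by auto
    qed
  next
    fix e assume "e \<in> {e. e \<noteq> [] \<and> (\<exists>i<length h. {?P ! i, ?P ! Suc i} = {e, butlast e})} \<union>
      {e. e \<noteq> [] \<and> {pos h, x} = {e, butlast e}}"
    then show "e \<in> {e. e \<noteq> [] \<and> (\<exists>i<length (h @ [(A, x)]). {?Q ! i, ?Q ! Suc i} = {e, butlast e})}"
    proof
      assume "e \<in> {e. e \<noteq> [] \<and> (\<exists>i<length h. {?P ! i, ?P ! Suc i} = {e, butlast e})}"
      then obtain i where i: "e \<noteq> []" "i < length h" "{?P ! i, ?P ! Suc i} = {e, butlast e}" by auto
      then have "{?Q ! i, ?Q ! Suc i} = {e, butlast e}" using a[of i] by simp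
      moreover have "i < length (h @ [(A, x)])" using i by simp
      ultimately show ?thesis using i by blast
    next
      assume "e \<in> {e. e \<noteq> [] \<and> {pos h, x} = {e, butlast e}}"
      then have "e \<noteq> []" "{?Q ! length h, ?Q ! Suc (length h)} = {e, butlast e}" using b by auto
      moreover have "length h < length (h @ [(A, x)])" by simp
      ultimately show ?thesis by blast
    qed
  qed
qed

lemma butlast_neq: "e \<noteq> [] \<Longrightarrow> butlast e \<noteq> e"
  by (metis append_butlast_last_id append_self_conv not_Cons_self2)

lemma edge_down: "{e. e \<noteq> [] \<and> {v, v @ [d]} = {e, butlast e}} = {v @ [d]}"
proof -
  have "e = v @ [d]" if "e \<noteq> []" "{v, v @ [d]} = {e, butlast e}" for e
  proof -
    from that(2) have "(v = e \<and> v @ [d] = butlast e) \<or> (v = butlast e \<and> v @ [d] = e)"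
      by (auto simp: doubleton_eq_iff)
    moreover have "\<not> (v = e \<and> v @ [d] = butlast e)"
    proof
      assume H: "v = e \<and> v @ [d] = butlast e"
      have L1: "length (butlast e) = length e - 1" by simp
      have L2: "length (v @ [d]) = length e + 1" using H by simp
      have "length (v @ [d]) = length (butlast e)" using H by (metis)
      then show False using L1 L2 by arith
    qed
    ultimately show ?thesis by auto
  qed
  then show ?thesis by auto
qed

lemma edge_up: "v \<noteq> [] \<Longrightarrow> {e. e \<noteq> [] \<and> {v, butlast v} = {e, butlast e}} = {v}"
proof -
  assume v: "v \<noteq> []"
  have "e = v" if "e \<noteq> []" "{v, butlast v} = {e, butlast e}" for e
  proof -
    from that(2) have "(v = e \<and> butlast v = butlast e) \<or> (v = butlast e \<and> butlast v = e)"
      by (auto simp: doubleton_eq_iff)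
    moreover have "\<not> (v = butlast e \<and> butlast v = e)"
    proof
      assume H: "v = butlast e \<and> butlast v = e"
      have L1: "length (butlast e) = length e - 1" "length (butlast v) = length v - 1" by simp_all
      have "length v = length (butlast e)" "length (butlast v) = length e" using H by metis+
      moreover have "length v > 0" using v by simp
      ultimately show False using L1 by arith
    qed
    ultimately show ?thesis by auto
  qed
  then show ?thesis using v by auto
qed

lemma edge_stay: "{e. e \<noteq> [] \<and> {v, v} = {e, butlast e}} = {}"
  using butlast_neq by (auto simp: doubleton_eq_iff)

lemma children_eq: "children t v = (\<lambda>d. v @ [d]) ` {d. v @ [d] \<in> verts t}"
  unfolding children_def by auto

lemma dfs_moves_cases:
  assumes "x \<in> dfs_moves t v S A"
  shows "(\<exists>d. v @ [d] \<in> verts t \<and> v @ [d] \<notin> S \<and> v @ [d] \<in> A \<and> x = v @ [d])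
    \<or> (x = v \<and> (\<forall>d. v @ [d] \<in> verts t \<longrightarrow> v @ [d] \<notin> S \<longrightarrow> v @ [d] \<notin> A)
        \<and> ((\<exists>d. v @ [d] \<in> verts t \<and> v @ [d] \<notin> S) \<or> v = [] \<or> v \<notin> A))
    \<or> (x = butlast v \<and> (\<forall>d. v @ [d] \<in> verts t \<longrightarrow> v @ [d] \<in> S) \<and> v \<noteq> [] \<and> v \<in> A)"
  using assms unfolding dfs_moves_def Let_def children_eq
  by (auto split: if_splits)


lemma finite_edges[simp]: "finite (edges t)" by (simp add: edges_def)

lemma prob_none_active:
  assumes K: "Ks \<subseteq> edges t" and p: "0 \<le> p" "p \<le> 1"
  shows "measure_pmf.prob (act_pmf t p) {A. A \<inter> Ks = {}} = (1 - p) ^ card Ks"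
proof -
  define B where "B = (\<lambda>e::vtx. if e \<in> Ks then {False} else (UNIV :: bool set))"
  have pre: "(\<lambda>f. {e. f e}) -` {A. A \<inter> Ks = {}} = Pi (edges t) B"
    using K unfolding B_def by (auto simp: Pi_def)
  have "measure_pmf.prob (act_pmf t p) {A. A \<inter> Ks = {}} =
      measure_pmf.prob (Pi_pmf (edges t) False (\<lambda>_. bernoulli_pmf p)) (Pi (edges t) B)"
    unfolding act_pmf_def measure_map_pmf pre by (rule refl)
  also have "\<dots> = (\<Prod>e\<in>edges t. measure_pmf.prob (bernoulli_pmf p) (B e))"
    by (rule measure_Pi_pmf_Pi) simp
  also have "\<dots> = (\<Prod>e\<in>edges t. if e \<in> Ks then 1 - p else 1)"
    using p by (intro prod.cong) (auto simp: B_def measure_pmf_single)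
  also have "\<dots> = (\<Prod>e\<in>edges t \<inter> Ks. 1 - p)"
    by (rule prod.inter_restrict[symmetric]) simp
  also have "edges t \<inter> Ks = Ks" using K by auto
  finally show ?thesis by simp
qed

lemma nn_if:
  fixes a b :: real
  assumes "0 \<le> a" "0 \<le> b"
  shows "(\<integral>\<^sup>+A. ennreal (if A \<in> E then a + b else a) \<partial>measure_pmf M) = ennreal (a + b * measure_pmf.prob M E)"
proof -
  have "(\<integral>\<^sup>+A. ennreal (if A \<in> E then a + b else a) \<partial>measure_pmf M) =
      (\<integral>\<^sup>+A. ennreal a + ennreal b * indicator E A \<partial>measure_pmf M)"
    using assms by (intro nn_integral_cong) (auto simp: ennreal_plus)
  also have "\<dots> = (\<integral>\<^sup>+A. ennreal a \<partial>measure_pmf M) + (\<integral>\<^sup>+A. ennreal b * indicator E A \<partial>measure_pmf M)"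
    by (rule nn_integral_add) auto
  also have "\<dots> = ennreal a + ennreal b * ennreal (measure_pmf.prob M E)"
    by (simp add: nn_integral_cmult_indicator measure_pmf.emeasure_eq_measure measure_pmf.emeasure_space_1)
  also have "\<dots> = ennreal (a + b * measure_pmf.prob M E)"
    using assms by (simp add: ennreal_mult ennreal_plus)
  finally show ?thesis .
qed


abbreviation "NS v x \<equiv> {e. e \<noteq> [] \<and> {v, x} = {e, butlast e}}"

lemma step_vals:
  assumes p: "0 < p" "p \<le> 1" and inv: "dinv t v S"
  obtains Ks a b where "Ks \<subseteq> edges t" "0 \<le> a" "0 \<le> b" "a + b * (1 - p) ^ card Ks + Rn p t S = C p t v S"
    "\<And>A x. x \<in> dfs_moves t v S A \<Longrightarrow> dinv t x (S \<union> NS v x) \<and>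
        C p t x (S \<union> NS v x) = (if A \<inter> Ks = {} then a + b else a)"
proof -
  have mem: "v \<in> verts t" "v \<noteq> [] \<Longrightarrow> v \<in> S" using dinv_mem[OF inv] by auto
  have R0: "0 \<le> Rn p t S" using Rn_bounds[OF p] by auto
  have q: "0 < qq p" using qq_pos[OF p] .
  have vd: "v @ [d] \<in> verts t \<Longrightarrow> v @ [d] \<in> edges t" for d by (simp add: edges_iff)
  show ?thesis
  proof (cases "v @ [0] \<in> verts t \<and> v @ [0] \<notin> S \<and> v @ [1] \<in> verts t \<and> v @ [1] \<notin> S")
    case True
    define a where "a = C p t v S - Rn p t S / qq p"
    define b where "b = Rn p t S / qq p"
    have D: "d \<le> 1 \<Longrightarrow> dinv t (v @ [d]) (insert (v @ [d]) S) \<and> C p t (v @ [d]) (insert (v @ [d]) S) = a" for d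
      using down2[OF p inv, of d] True inv_down[OF inv, of d] unfolding a_def by (cases d) auto
    have a0: "0 \<le> a" using D[of 0] C_bounds[OF p] by fastforce
    have b0: "0 \<le> b" using R0 q unfolding b_def by simp
    have card: "card {v @ [0], v @ [1]} = 2" by simp
    have "Rn p t S / qq p * (1 - p)^2 = Rn p t S / qq p - Rn p t S"
      using q unfolding qq_def by (simp add: field_simps)
    then have id: "a + b * (1 - p) ^ card {v @ [0], v @ [1]} + Rn p t S = C p t v S"
      unfolding card a_def b_def by simp
    have sub: "{v @ [0], v @ [1]} \<subseteq> edges t" using True vd by auto
    show ?thesis
    proof (rule that[OF sub a0 b0 id])
      fix A x assume x: "x \<in> dfs_moves t v S A"
      from dfs_moves_cases[OF x] consider (dn) d where "v @ [d] \<in> verts t" "v @ [d] \<notin> S" "v @ [d] \<in> A" "x = v @ [d]"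
        | (st) "x = v" "\<forall>d. v @ [d] \<in> verts t \<longrightarrow> v @ [d] \<notin> S \<longrightarrow> v @ [d] \<notin> A"
           "(\<exists>d. v @ [d] \<in> verts t \<and> v @ [d] \<notin> S) \<or> v = [] \<or> v \<notin> A"
        | (upc) "x = butlast v" "\<forall>d. v @ [d] \<in> verts t \<longrightarrow> v @ [d] \<in> S" "v \<noteq> []" "v \<in> A" by blast
      then show "dinv t x (S \<union> NS v x) \<and>
        C p t x (S \<union> NS v x) = (if A \<inter> {v @ [0], v @ [1]} = {} then a + b else a)"
      proof cases
        case (dn d) note d = dn
        have "d \<le> 1" using snoc_verts[OF d(1)] by simp
        then have "A \<inter> {v @ [0], v @ [1]} \<noteq> {}" using d by (cases d) auto
        then show ?thesis using D[OF \<open>d \<le> 1\<close>] d(4) edge_down[of v d] by auto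
      next
        case st note xv = st
        then have "A \<inter> {v @ [0], v @ [1]} = {}" using True by auto
        then show ?thesis using inv unfolding a_def b_def xv(1) edge_stay by simp
      next
        case upc note u = upc
        show ?thesis using True u by auto
      qed
    qed
  next
    case False
    show ?thesis
    proof (cases "\<exists>d. v @ [d] \<in> verts t \<and> v @ [d] \<notin> S")
      case True
      then obtain d0 where d0: "v @ [d0] \<in> verts t" "v @ [d0] \<notin> S" by auto
      have oth: "\<forall>d'. d' \<noteq> d0 \<longrightarrow> v @ [d'] \<in> verts t \<longrightarrow> v @ [d'] \<in> S"
      proof (intro allI impI)
        fix d' assume "d' \<noteq> d0" "v @ [d'] \<in> verts t"
        then have "d' \<le> 1" "d0 \<le> 1" using snoc_verts d0 by auto
        then have "d' = 0 \<or> d' = 1" "d0 = 0 \<or> d0 = 1" by auto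
        then show "v @ [d'] \<in> S" using False d0 \<open>d' \<noteq> d0\<close> \<open>v @ [d'] \<in> verts t\<close>
          by auto
      qed
      define a where "a = C p t v S - Rn p t S / p"
      define b where "b = Rn p t S / p"
      have D: "dinv t (v @ [d0]) (insert (v @ [d0]) S) \<and> C p t (v @ [d0]) (insert (v @ [d0]) S) = a"
        using down1[OF p inv d0 oth] inv_down[OF inv d0] unfolding a_def by auto
      have a0: "0 \<le> a" using D C_bounds[OF p] by fastforce
      have b0: "0 \<le> b" using R0 p unfolding b_def by simp
      have "Rn p t S / p * (1 - p) = Rn p t S / p - Rn p t S"
        using p by (simp add: field_simps)
      then have id: "a + b * (1 - p) ^ card {v @ [d0]} + Rn p t S = C p t v S"
        unfolding a_def b_def by simp
      have sub: "{v @ [d0]} \<subseteq> edges t" using d0 vd by auto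
      show ?thesis
      proof (rule that[OF sub a0 b0 id])
        fix A x assume x: "x \<in> dfs_moves t v S A"
        from dfs_moves_cases[OF x] consider (dn) d where "v @ [d] \<in> verts t" "v @ [d] \<notin> S" "v @ [d] \<in> A" "x = v @ [d]"
          | (st) "x = v" "\<forall>d. v @ [d] \<in> verts t \<longrightarrow> v @ [d] \<notin> S \<longrightarrow> v @ [d] \<notin> A"
             "(\<exists>d. v @ [d] \<in> verts t \<and> v @ [d] \<notin> S) \<or> v = [] \<or> v \<notin> A"
          | (upc) "x = butlast v" "\<forall>d. v @ [d] \<in> verts t \<longrightarrow> v @ [d] \<in> S" "v \<noteq> []" "v \<in> A" by blast
        then show "dinv t x (S \<union> NS v x) \<and>
          C p t x (S \<union> NS v x) = (if A \<inter> {v @ [d0]} = {} then a + b else a)"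
        proof cases
          case (dn d) note d = dn
          then have "d = d0" using oth by auto
          then show ?thesis using D d edge_down[of v d] by auto
        next
          case st note xv = st
          then have "A \<inter> {v @ [d0]} = {}" using d0 by auto
          then show ?thesis using inv unfolding a_def b_def xv(1) edge_stay by simp
        next
          case upc note u = upc
          show ?thesis using d0 u by auto
        qed
      qed
    next
      case nf: False
      then have allS: "\<forall>d. v @ [d] \<in> verts t \<longrightarrow> v @ [d] \<in> S" by auto
      show ?thesis
      proof (cases "v = []")
        case True
        have fv: "C p t v S = C p t v S \<and> Rn p t S = 0" using final_vals[of t S p] inv allS True by auto
        have sub: "{} \<subseteq> edges t" by simp
        have a0: "0 \<le> C p t v S" using C_bounds[OF p inv] by auto
        have id: "C p t v S + 0 * (1 - p) ^ card {} + Rn p t S = C p t v S" using fv by simp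
        show ?thesis
        proof (rule that[OF sub a0 _ id])
          fix A x assume x: "x \<in> dfs_moves t v S A"
          from dfs_moves_cases[OF x] consider (dn) d where "v @ [d] \<in> verts t" "v @ [d] \<notin> S" "v @ [d] \<in> A" "x = v @ [d]"
            | (st) "x = v" "\<forall>d. v @ [d] \<in> verts t \<longrightarrow> v @ [d] \<notin> S \<longrightarrow> v @ [d] \<notin> A"
               "(\<exists>d. v @ [d] \<in> verts t \<and> v @ [d] \<notin> S) \<or> v = [] \<or> v \<notin> A"
            | (upc) "x = butlast v" "\<forall>d. v @ [d] \<in> verts t \<longrightarrow> v @ [d] \<in> S" "v \<noteq> []" "v \<in> A" by blast
          then show "dinv t x (S \<union> NS v x) \<and>
            C p t x (S \<union> NS v x) = (if A \<inter> {} = {} then C p t v S + 0 else C p t v S)"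
          proof cases
            case (dn d) note d = dn
            then show ?thesis using allS by auto
          next
            case st note xv = st
            show ?thesis using inv unfolding xv edge_stay by simp
          next
            case upc then show ?thesis using True by simp
          qed
        qed simp
      next
        case vne: False
        define a where "a = C p t v S - Rn p t S / p"
        define b where "b = Rn p t S / p"
        have U: "dinv t (butlast v) S \<and> C p t (butlast v) S = a"
          using up[OF p inv vne allS] inv_up[OF inv vne allS] unfolding a_def by auto
        have a0: "0 \<le> a" using U C_bounds[OF p] by fastforce
        have b0: "0 \<le> b" using R0 p unfolding b_def by simp
        have "Rn p t S / p * (1 - p) = Rn p t S / p - Rn p t S"
          using p by (simp add: field_simps)
        then have id: "a + b * (1 - p) ^ card {v} + Rn p t S = C p t v S"
          unfolding a_def b_def by simp
        have sub: "{v} \<subseteq> edges t" using mem vne by (simp add: edges_iff)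
        show ?thesis
        proof (rule that[OF sub a0 b0 id])
          fix A x assume x: "x \<in> dfs_moves t v S A"
          from dfs_moves_cases[OF x] consider (dn) d where "v @ [d] \<in> verts t" "v @ [d] \<notin> S" "v @ [d] \<in> A" "x = v @ [d]"
            | (st) "x = v" "\<forall>d. v @ [d] \<in> verts t \<longrightarrow> v @ [d] \<notin> S \<longrightarrow> v @ [d] \<notin> A"
               "(\<exists>d. v @ [d] \<in> verts t \<and> v @ [d] \<notin> S) \<or> v = [] \<or> v \<notin> A"
            | (upc) "x = butlast v" "\<forall>d. v @ [d] \<in> verts t \<longrightarrow> v @ [d] \<in> S" "v \<noteq> []" "v \<in> A" by blast
          then show "dinv t x (S \<union> NS v x) \<and>
            C p t x (S \<union> NS v x) = (if A \<inter> {v} = {} then a + b else a)"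
          proof cases
            case (dn d) note d = dn
            then show ?thesis using allS by auto
          next
            case st
            then have "v \<notin> A" using nf vne by auto
            then show ?thesis using inv unfolding a_def b_def \<open>x = v\<close> edge_stay by simp
          next
            case upc
            moreover have "S \<union> {v} = S" using mem vne by auto
            ultimately show ?thesis using U edge_up[OF vne] by auto
          qed
        qed
      qed
    qed
  qed
qed


lemma step_inv:
  fixes p :: real
  assumes p: "0 < p" "p \<le> 1" and inv: "dinv t v S" and x: "x \<in> dfs_moves t v S A"
  shows "dinv t x (S \<union> NS v x)"
proof -
  obtain Ks a b where "\<And>A x. x \<in> dfs_moves t v S A \<Longrightarrow> dinv t x (S \<union> NS v x) \<and>
        C p t x (S \<union> NS v x) = (if A \<inter> Ks = {} then a + b else a)"
    by (rule step_vals[OF p inv]) blast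
  then show ?thesis using x by blast
qed


lemma reach:
  assumes p: "0 < p" "p \<le> 1" and dfs: "is_dfs t \<sigma>"
  shows "\<forall>h\<in>set_pmf (hist_dist t p \<sigma> n). dinv t (pos h) (traversed h)"
proof (induction n)
  case 0 then show ?case using inv_init by simp
next
  case (Suc n)
  show ?case
  proof
    fix h' assume "h' \<in> set_pmf (hist_dist t p \<sigma> (Suc n))"
    then obtain h A x where h: "h \<in> set_pmf (hist_dist t p \<sigma> n)" and x: "x \<in> set_pmf (\<sigma> h A)"
      and h': "h' = h @ [(A, x)]" by auto
    have inv: "dinv t (pos h) (traversed h)" using Suc h by auto
    have "x \<in> dfs_moves t (pos h) (traversed h) A" using dfs x unfolding is_dfs_def by auto
    then have "dinv t x (traversed h \<union> NS (pos h) x)" by (rule step_inv[OF p inv])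
    then show "dinv t (pos h') (traversed h')"
      unfolding h' traversed_snoc pos_snoc .
  qed
qed

lemma step_exp:
  assumes p: "0 < p" "p \<le> 1" and dfs: "is_dfs t \<sigma>" and inv: "dinv t (pos h) (traversed h)"
  shows "(\<integral>\<^sup>+A. \<integral>\<^sup>+x. ennreal (C p t (pos (h @ [(A, x)])) (traversed (h @ [(A, x)]))) \<partial>\<sigma> h A \<partial>act_pmf t p)
    + ennreal (Rn p t (traversed h)) = ennreal (C p t (pos h) (traversed h))"
proof -
  obtain Ks a b where Ks: "Ks \<subseteq> edges t" and ab: "0 \<le> a" "0 \<le> b"
    and id: "a + b * (1 - p) ^ card Ks + Rn p t (traversed h) = C p t (pos h) (traversed h)"
    and val0: "\<And>A x. x \<in> dfs_moves t (pos h) (traversed h) A \<Longrightarrow>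
       dinv t x (traversed h \<union> NS (pos h) x) \<and>
       C p t x (traversed h \<union> NS (pos h) x) = (if A \<inter> Ks = {} then a + b else a)"
    by (rule step_vals[OF p inv]) blast
  have val: "\<And>A x. x \<in> dfs_moves t (pos h) (traversed h) A \<Longrightarrow>
       C p t x (traversed h \<union> NS (pos h) x) = (if A \<inter> Ks = {} then a + b else a)"
    using val0 by blast
  have inner: "(\<integral>\<^sup>+x. ennreal (C p t (pos (h @ [(A, x)])) (traversed (h @ [(A, x)]))) \<partial>\<sigma> h A)
      = ennreal (if A \<in> {A. A \<inter> Ks = {}} then a + b else a)" for A
  proof -
    have "(\<integral>\<^sup>+x. ennreal (C p t (pos (h @ [(A, x)])) (traversed (h @ [(A, x)]))) \<partial>\<sigma> h A)
      = (\<integral>\<^sup>+x. ennreal (if A \<in> {A. A \<inter> Ks = {}} then a + b else a) \<partial>\<sigma> h A)"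
    proof (rule nn_integral_cong_AE)
      show "AE x in measure_pmf (\<sigma> h A). ennreal (C p t (pos (h @ [(A, x)])) (traversed (h @ [(A, x)]))) =
          ennreal (if A \<in> {A. A \<inter> Ks = {}} then a + b else a)"
        unfolding AE_measure_pmf_iff
      proof
        fix x assume "x \<in> set_pmf (\<sigma> h A)"
        then have "x \<in> dfs_moves t (pos h) (traversed h) A" using dfs unfolding is_dfs_def by auto
        then show "ennreal (C p t (pos (h @ [(A, x)])) (traversed (h @ [(A, x)]))) =
          ennreal (if A \<in> {A. A \<inter> Ks = {}} then a + b else a)"
          using val traversed_snoc[of h A x] by simp
      qed
    qed
    also have "\<dots> = ennreal (if A \<in> {A. A \<inter> Ks = {}} then a + b else a)"
      by (simp add: measure_pmf.emeasure_space_1)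
    finally show ?thesis .
  qed
  have "(\<integral>\<^sup>+A. \<integral>\<^sup>+x. ennreal (C p t (pos (h @ [(A, x)])) (traversed (h @ [(A, x)]))) \<partial>\<sigma> h A \<partial>act_pmf t p)
      = (\<integral>\<^sup>+A. ennreal (if A \<in> {A. A \<inter> Ks = {}} then a + b else a) \<partial>act_pmf t p)"
    using inner by simp
  also have "\<dots> = ennreal (a + b * (1 - p) ^ card Ks)"
    using nn_if[OF ab, of "act_pmf t p" "{A. A \<inter> Ks = {}}"] prob_none_active[OF Ks, of p] p by simp
  moreover have "0 \<le> b * (1 - p) ^ card Ks" using ab p by simp
  moreover have "0 \<le> Rn p t (traversed h)" using Rn_bounds[OF p, of t "traversed h"] by simp
  ultimately show ?thesis
    using id ab by (simp only: ennreal_plus[symmetric] add_nonneg_nonneg)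
qed

definition PhiN where "PhiN t p \<sigma> n = (\<integral>\<^sup>+h. ennreal (C p t (pos h) (traversed h)) \<partial>hist_dist t p \<sigma> n)"
definition RN where "RN t p \<sigma> n = (\<integral>\<^sup>+h. ennreal (Rn p t (traversed h)) \<partial>hist_dist t p \<sigma> n)"

lemma PhiN_step:
  assumes p: "0 < p" "p \<le> 1" and dfs: "is_dfs t \<sigma>"
  shows "PhiN t p \<sigma> (Suc n) + RN t p \<sigma> n = PhiN t p \<sigma> n"
proof -
  have "PhiN t p \<sigma> (Suc n) + RN t p \<sigma> n =
    (\<integral>\<^sup>+h. (\<integral>\<^sup>+A. \<integral>\<^sup>+x. ennreal (C p t (pos (h @ [(A, x)])) (traversed (h @ [(A, x)]))) \<partial>\<sigma> h A \<partial>act_pmf t p)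
     \<partial>hist_dist t p \<sigma> n) + RN t p \<sigma> n"
    unfolding PhiN_def by simp
  also have "\<dots> = (\<integral>\<^sup>+h. (\<integral>\<^sup>+A. \<integral>\<^sup>+x. ennreal (C p t (pos (h @ [(A, x)])) (traversed (h @ [(A, x)]))) \<partial>\<sigma> h A \<partial>act_pmf t p)
     + ennreal (Rn p t (traversed h)) \<partial>hist_dist t p \<sigma> n)"
    unfolding RN_def by (rule nn_integral_add[symmetric]) auto
  also have "\<dots> = PhiN t p \<sigma> n"
    unfolding PhiN_def
  proof (rule nn_integral_cong_AE)
    show "AE h in measure_pmf (hist_dist t p \<sigma> n).
      (\<integral>\<^sup>+A. \<integral>\<^sup>+x. ennreal (C p t (pos (h @ [(A, x)])) (traversed (h @ [(A, x)]))) \<partial>\<sigma> h A \<partial>act_pmf t p)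
      + ennreal (Rn p t (traversed h)) = ennreal (C p t (pos h) (traversed h))"
      unfolding AE_measure_pmf_iff using step_exp[OF p dfs] reach[OF p dfs, of n] by auto
  qed
  finally show ?thesis .
qed


fun emass :: "real \<Rightarrow> btree \<Rightarrow> vtx \<Rightarrow> real" where
  "emass p (Node1 s) (0 # w) = (if w = [] then (if s = Leaf then 1 else 0) else emass p s w)"
| "emass p (Node2 l r) (0 # w) = wl p l r * (if w = [] then (if l = Leaf then 1 else 0) else emass p l w)"
| "emass p (Node2 l r) (Suc 0 # w) = wr p l r * (if w = [] then (if r = Leaf then 1 else 0) else emass p r w)"
| "emass p _ _ = 0"

lemma edges_Leaf[simp]: "edges Leaf = {}" by (simp add: edges_def)
lemma edges_N1: "edges (Node1 s) = Cons 0 ` verts s" by (auto simp: edges_def verts.simps)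
lemma edges_N2: "edges (Node2 l r) = Cons 0 ` verts l \<union> Cons 1 ` verts r" by (auto simp: edges_def verts.simps)
lemma nil_notin_edges[simp]: "[] \<notin> edges s" by (simp add: edges_def)
lemma verts_ins: "verts s = insert [] (edges s)" by (auto simp: edges_def)

lemma fin_edges: "finite (edges s)" by (simp add: edges_def)

lemma sum_verts: "sum f (verts s) = f [] + sum f (edges s)"
  by (subst verts_ins) (simp add: sum.insert fin_edges)

lemma sum_Cons: "sum f (Cons d ` A) = sum (\<lambda>w. f (d # w)) A"
  by (subst sum.reindex) (auto simp: inj_on_def)

lemma sum_N1: "sum f (edges (Node1 s)) = f [0] + sum (\<lambda>w. f (0 # w)) (edges s)"
  unfolding edges_N1 sum_Cons sum_verts by simp

lemma sum_N2: "sum f (edges (Node2 l r)) = f [0] + sum (\<lambda>w. f (0 # w)) (edges l) + (f [1] + sum (\<lambda>w. f (1 # w)) (edges r))"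
proof -
  have "Cons 0 ` verts l \<inter> Cons 1 ` verts r = {}" by auto
  then have "sum f (edges (Node2 l r)) = sum f (Cons 0 ` verts l) + sum f (Cons 1 ` verts r)"
    unfolding edges_N2 using sum.union_disjoint[of "Cons 0 ` verts l" "Cons 1 ` verts r" f] by auto
  then show ?thesis unfolding sum_Cons sum_verts by simp
qed

lemma Rn_sum: "Rn p t S = (\<Sum>e\<in>edges t. emass p t e * (if e \<in> S then 0 else 1))"
proof (induction t arbitrary: S)
  case Leaf then show ?case by simp
next
  case (Node1 s)
  have "(\<Sum>w\<in>edges s. emass p (Node1 s) (0 # w) * (if 0 # w \<in> S then 0 else 1)) =
      (\<Sum>w\<in>edges s. emass p s w * (if w \<in> dr 0 S then 0 else 1))"
    by (intro sum.cong) auto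
  then show ?case unfolding sum_N1 using Node1.IH[of "dr 0 S"] by simp
next
  case (Node2 l r)
  have a: "(\<Sum>w\<in>edges l. emass p (Node2 l r) (0 # w) * (if 0 # w \<in> S then 0 else 1)) =
      wl p l r * (\<Sum>w\<in>edges l. emass p l w * (if w \<in> dr 0 S then 0 else 1))"
    unfolding sum_distrib_left by (intro sum.cong) auto
  have b: "(\<Sum>w\<in>edges r. emass p (Node2 l r) (1 # w) * (if 1 # w \<in> S then 0 else 1)) =
      wr p l r * (\<Sum>w\<in>edges r. emass p r w * (if w \<in> dr 1 S then 0 else 1))"
    unfolding sum_distrib_left by (intro sum.cong) auto
  show ?case unfolding sum_N2 a b using Node2.IH(1)[of "dr 0 S"] Node2.IH(2)[of "dr 1 S"]
    by (simp add: algebra_simps)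
qed

lemma emass_nonneg: "0 < p \<Longrightarrow> p \<le> 1 \<Longrightarrow> 0 \<le> emass p t x"
proof (induction p t x rule: emass.induct)
  case (2 p l r w)
  have w: "0 < wl p l r" using w_facts[OF 2(2,3)] by auto
  show ?case using 2 w by auto
next
  case (3 p l r w)
  have w: "0 < wr p l r" using w_facts[OF 3(2,3)] by auto
  show ?case using 3 w by auto
qed auto

lemma emass_supp: "emass p t x \<noteq> 0 \<Longrightarrow> x \<in> edges t \<and> (\<forall>d. x @ [d] \<notin> verts t)"
proof (induction p t x rule: emass.induct)
  case (1 p s w) then show ?case by (cases w) (auto simp: edges_iff split: if_splits)
next
  case (2 p l r w) then show ?case by (cases w) (auto simp: edges_iff split: if_splits)
next
  case (3 p l r w) then show ?case by (cases w) (auto simp: edges_iff split: if_splits)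
qed auto

lemma emass_sum: "0 < p \<Longrightarrow> p \<le> 1 \<Longrightarrow> t \<noteq> Leaf \<Longrightarrow> sum (emass p t) (edges t) = 1"
  using Rn_sum[of p t "{}"] fresh_vals[of p t "{}"] by simp


lemma PhiN_0: "0 < p \<Longrightarrow> p \<le> 1 \<Longrightarrow> PhiN t p \<sigma> 0 = ennreal (G p t)"
  unfolding PhiN_def using fresh_vals[of p t "{}"] by simp

lemma sum_rel: "0 < p \<Longrightarrow> p \<le> 1 \<Longrightarrow> is_dfs t \<sigma> \<Longrightarrow>
  (\<Sum>k<n. RN t p \<sigma> k) + PhiN t p \<sigma> n = PhiN t p \<sigma> 0"
proof (induction n)
  case 0 then show ?case by simp
next
  case (Suc n)
  have "(\<Sum>k<Suc n. RN t p \<sigma> k) + PhiN t p \<sigma> (Suc n) = (\<Sum>k<n. RN t p \<sigma> k) + (PhiN t p \<sigma> (Suc n) + RN t p \<sigma> n)"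
    by (simp add: algebra_simps)
  also have "\<dots> = (\<Sum>k<n. RN t p \<sigma> k) + PhiN t p \<sigma> n" using PhiN_step[OF Suc.prems] by simp
  finally show ?case using Suc by simp
qed

lemma RN_le1: "0 < p \<Longrightarrow> p \<le> 1 \<Longrightarrow> RN t p \<sigma> n \<le> 1"
proof -
  assume p: "0 < p" "p \<le> 1"
  have "RN t p \<sigma> n \<le> (\<integral>\<^sup>+h. 1 \<partial>hist_dist t p \<sigma> n)"
    unfolding RN_def using Rn_bounds[OF p] by (intro nn_integral_mono) simp
  then show ?thesis by (simp add: measure_pmf.emeasure_space_1)
qed

lemma PhiN_le: "0 < p \<Longrightarrow> p \<le> 1 \<Longrightarrow> is_dfs t \<sigma> \<Longrightarrow> PhiN t p \<sigma> n \<le> ennreal (K p t) * RN t p \<sigma> n"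
proof -
  assume p: "0 < p" "p \<le> 1" and dfs: "is_dfs t \<sigma>"
  have "PhiN t p \<sigma> n \<le> (\<integral>\<^sup>+h. ennreal (K p t) * ennreal (Rn p t (traversed h)) \<partial>hist_dist t p \<sigma> n)"
    unfolding PhiN_def
  proof (rule nn_integral_mono_AE)
    show "AE h in measure_pmf (hist_dist t p \<sigma> n). ennreal (C p t (pos h) (traversed h)) \<le>
      ennreal (K p t) * ennreal (Rn p t (traversed h))"
      unfolding AE_measure_pmf_iff
    proof
      fix h assume "h \<in> set_pmf (hist_dist t p \<sigma> n)"
      then have "dinv t (pos h) (traversed h)" using reach[OF p dfs] by auto
      then have "C p t (pos h) (traversed h) \<le> K p t * Rn p t (traversed h)" using C_bounds[OF p] by auto
      moreover have "0 \<le> K p t" using K_nonneg[OF p] .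
      ultimately show "ennreal (C p t (pos h) (traversed h)) \<le> ennreal (K p t) * ennreal (Rn p t (traversed h))"
        by (simp add: ennreal_mult[symmetric] Rn_bounds[OF p] ennreal_leI)
    qed
  qed
  also have "\<dots> = ennreal (K p t) * RN t p \<sigma> n" unfolding RN_def by (rule nn_integral_cmult) simp
  finally show ?thesis .
qed

lemma chain:
  assumes p: "0 < p" "p \<le> 1" and dfs: "is_dfs t \<sigma>"
  shows "(\<Sum>k. RN t p \<sigma> k) = ennreal (G p t)"
proof -
  define r where "r k = enn2real (RN t p \<sigma> k)" for k
  define \<beta> where "\<beta> k = enn2real (PhiN t p \<sigma> k)" for k
  define Kc where "Kc = K p t"
  have Kc: "0 \<le> Kc" using K_nonneg[OF p] unfolding Kc_def .
  have RNf: "RN t p \<sigma> k < top" for k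
  proof -
    have "(1::ennreal) < top" by simp
    then show ?thesis using RN_le1[OF p, of t \<sigma> k] by (rule order_le_less_trans[rotated])
  qed
  have PNf: "PhiN t p \<sigma> k < top" for k
  proof -
    have "PhiN t p \<sigma> k \<le> ennreal Kc * RN t p \<sigma> k" using PhiN_le[OF p dfs] unfolding Kc_def .
    also have "\<dots> < top" using RNf[of k] by (simp add: ennreal_mult_less_top)
    finally show ?thesis .
  qed
  have RNe: "RN t p \<sigma> k = ennreal (r k)" for k using RNf unfolding r_def by simp
  have PNe: "PhiN t p \<sigma> k = ennreal (\<beta> k)" for k using PNf unfolding \<beta>_def by simp
  have r0: "0 \<le> r k" for k unfolding r_def by simp
  have b0: "0 \<le> \<beta> k" for k unfolding \<beta>_def by simp
  have step: "\<beta> (Suc k) + r k = \<beta> k" for k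
  proof -
    have "\<beta> k = enn2real (PhiN t p \<sigma> (Suc k) + RN t p \<sigma> k)" unfolding \<beta>_def using PhiN_step[OF p dfs] by simp
    also have "\<dots> = \<beta> (Suc k) + r k" unfolding \<beta>_def r_def by (rule enn2real_plus[OF PNf RNf])
    finally show ?thesis by simp
  qed
  have bK: "\<beta> k \<le> Kc * r k" for k
  proof -
    have "PhiN t p \<sigma> k \<le> ennreal (Kc * r k)" using PhiN_le[OF p dfs, of k] unfolding RNe Kc_def
      by (simp add: ennreal_mult[OF K_nonneg[OF p] r0[of k]])
    then have "enn2real (PhiN t p \<sigma> k) \<le> enn2real (ennreal (Kc * r k))"
      by (rule enn2real_mono) simp
    then show ?thesis unfolding \<beta>_def using Kc r0[of k] by simp
  qed
  have b00: "\<beta> 0 = G p t" unfolding \<beta>_def using PhiN_0[OF p] G_nonneg[OF p] by simp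
  have psum: "(\<Sum>k<n. r k) = \<beta> 0 - \<beta> n" for n
  proof (induction n)
    case (Suc n) then show ?case using step[of n] by simp
  qed simp
  have summ: "summable r"
    by (rule summableI_nonneg_bounded[where x = "\<beta> 0"]) (use r0 psum b0 in auto)
  have rl: "r \<longlonglongrightarrow> 0" by (rule summable_LIMSEQ_zero[OF summ])
  have h1: "(\<lambda>k. Kc * r k) \<longlonglongrightarrow> 0" using tendsto_mult[OF tendsto_const rl, of Kc] by simp
  have bl: "\<beta> \<longlonglongrightarrow> 0"
  proof (rule tendsto_sandwich[OF _ _ tendsto_const h1])
    show "\<forall>\<^sub>F n in sequentially. 0 \<le> \<beta> n" using b0 by simp
    show "\<forall>\<^sub>F n in sequentially. \<beta> n \<le> Kc * r n" using bK by simp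
  qed
  have "(\<lambda>n. \<beta> 0 - \<beta> n) \<longlonglongrightarrow> \<beta> 0 - 0" by (rule tendsto_diff[OF tendsto_const bl])
  then have "r sums \<beta> 0" unfolding sums_def psum by simp
  then have "(\<Sum>k. ennreal (r k)) = ennreal (\<beta> 0)" by (rule suminf_ennreal_eq[OF r0])
  then show ?thesis unfolding RNe b00 .
qed

lemma payoff_eq:
  assumes p: "0 < p" "p \<le> 1" and dfs: "is_dfs t \<sigma>"
  shows "payoff t p (emass p t) \<sigma> = (\<Sum>k. RN t p \<sigma> k)"
proof -
  define f where "f e k = ennreal (emass p t e) * ennreal (measure_pmf.prob (hist_dist t p \<sigma> k) {h. e \<notin> traversed h})" for e k
  have RN: "RN t p \<sigma> k = (\<Sum>e\<in>edges t. f e k)" for k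
  proof -
    have "RN t p \<sigma> k = (\<integral>\<^sup>+h. (\<Sum>e\<in>edges t. ennreal (emass p t e) * indicator {h. e \<notin> traversed h} h) \<partial>hist_dist t p \<sigma> k)"
      unfolding RN_def Rn_sum
    proof (intro nn_integral_cong)
      fix h
      have "ennreal (\<Sum>e\<in>edges t. emass p t e * (if e \<in> traversed h then 0 else 1)) =
        (\<Sum>e\<in>edges t. ennreal (emass p t e * (if e \<in> traversed h then 0 else 1)))"
        using emass_nonneg[OF p] by (intro sum_ennreal[symmetric]) simp
      also have "\<dots> = (\<Sum>e\<in>edges t. ennreal (emass p t e) * indicator {h. e \<notin> traversed h} h)"
        by (intro sum.cong) (auto simp: indicator_def)
      finally show "ennreal (\<Sum>e\<in>edges t. emass p t e * (if e \<in> traversed h then 0 else 1)) =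
        (\<Sum>e\<in>edges t. ennreal (emass p t e) * indicator {h. e \<notin> traversed h} h)" .
    qed
    also have "\<dots> = (\<Sum>e\<in>edges t. \<integral>\<^sup>+h. ennreal (emass p t e) * indicator {h. e \<notin> traversed h} h \<partial>hist_dist t p \<sigma> k)"
      by (rule nn_integral_sum) simp
    also have "\<dots> = (\<Sum>e\<in>edges t. f e k)"
      unfolding f_def by (intro sum.cong refl) (simp add: nn_integral_cmult_indicator measure_pmf.emeasure_eq_measure)
    finally show ?thesis .
  qed
  have "(\<Sum>k. RN t p \<sigma> k) = (\<integral>\<^sup>+k. (\<Sum>e\<in>edges t. f e k) \<partial>count_space UNIV)"
    unfolding RN by (rule nn_integral_count_space_nat[symmetric])
  also have "\<dots> = (\<Sum>e\<in>edges t. \<integral>\<^sup>+k. f e k \<partial>count_space UNIV)"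
    by (rule nn_integral_sum) simp
  also have "\<dots> = (\<Sum>e\<in>edges t. \<Sum>k. f e k)"
    by (simp add: nn_integral_count_space_nat)
  also have "\<dots> = payoff t p (emass p t) \<sigma>"
    unfolding payoff_def exp_time_def f_def by simp
  finally show ?thesis by simp
qed


lemma Esub_N1_nil: "Esub (Node1 s) [0] = Cons 0 ` verts s"
  by (auto simp: Esub_def edges_N1)
lemma Esub_N2_nil0: "Esub (Node2 l r) [0] = Cons 0 ` verts l"
  by (auto simp: Esub_def edges_N2)
lemma Esub_N2_nil1: "Esub (Node2 l r) [1] = Cons 1 ` verts r"
  by (auto simp: Esub_def edges_N2)
lemma Esub_N1_cons: "u \<noteq> [] \<Longrightarrow> Esub (Node1 s) (0 # u) = Cons 0 ` Esub s u"
  by (auto simp: Esub_def edges_N1 edges_iff)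
lemma Esub_N2_cons0: "u \<noteq> [] \<Longrightarrow> Esub (Node2 l r) (0 # u) = Cons 0 ` Esub l u"
  by (auto simp: Esub_def edges_N2 edges_iff)
lemma Esub_N2_cons1: "u \<noteq> [] \<Longrightarrow> Esub (Node2 l r) (Suc 0 # u) = Cons 1 ` Esub r u"
  by (auto simp: Esub_def edges_N2 edges_iff)

lemma Esub_sub: "Esub t e \<subseteq> edges t" by (auto simp: Esub_def)
lemma Esub_edges: "x \<in> Esub t e \<Longrightarrow> x \<noteq> []" by (auto simp: Esub_def edges_iff)

lemma tau_edge_N1: "tau_edge p (Node1 s) (0 # u) = (if u = [] then te p s else tau_edge p s u)"
  by (cases u) (auto simp: tau_edge_def te_def)
lemma tau_edge_N20: "tau_edge p (Node2 l r) (0 # u) = (if u = [] then te p l else tau_edge p l u)"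
  by (cases u) (auto simp: tau_edge_def te_def)
lemma tau_edge_N21: "tau_edge p (Node2 l r) (Suc 0 # u) = (if u = [] then te p r else tau_edge p r u)"
  by (cases u) (auto simp: tau_edge_def te_def)

lemma sum_vertsE: "0 < p \<Longrightarrow> p \<le> 1 \<Longrightarrow>
   (\<Sum>w\<in>verts s. (if w = [] then (if s = Leaf then 1 else 0) else emass p s w)) = 1"
proof -
  assume p: "0 < p" "p \<le> 1"
  have "(\<Sum>w\<in>edges s. (if w = [] then (if s = Leaf then 1 else 0) else emass p s w)) = sum (emass p s) (edges s)"
    by (intro sum.cong) auto
  then show ?thesis unfolding sum_verts using emass_sum[OF p, of s] by (cases "s = Leaf") auto
qed

definition ratio :: "real \<Rightarrow> btree \<Rightarrow> (vtx \<Rightarrow> real) \<Rightarrow> bool" where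
  "ratio p t \<epsilon> \<longleftrightarrow> (\<forall>v. v @ [0] \<in> verts t \<longrightarrow> v @ [1] \<in> verts t \<longrightarrow>
     sum \<epsilon> (Esub t (v @ [0])) / tau_edge p t (v @ [0]) = sum \<epsilon> (Esub t (v @ [1])) / tau_edge p t (v @ [1]))"

lemma ratio_N1: "ratio p (Node1 s) \<epsilon> \<Longrightarrow> ratio p s (\<lambda>w. \<epsilon> (0 # w))"
  unfolding ratio_def
proof (intro allI impI)
  fix v assume r: "\<forall>v. v @ [0] \<in> verts (Node1 s) \<longrightarrow> v @ [1] \<in> verts (Node1 s) \<longrightarrow>
     sum \<epsilon> (Esub (Node1 s) (v @ [0])) / tau_edge p (Node1 s) (v @ [0]) =
     sum \<epsilon> (Esub (Node1 s) (v @ [1])) / tau_edge p (Node1 s) (v @ [1])"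
    and v: "v @ [0] \<in> verts s" "v @ [1] \<in> verts s"
  have "sum \<epsilon> (Esub (Node1 s) ((0 # v) @ [d])) = (\<Sum>w\<in>Esub s (v @ [d]). \<epsilon> (0 # w))" for d
    by (simp add: Esub_N1_cons sum_Cons)
  moreover have "tau_edge p (Node1 s) ((0 # v) @ [d]) = tau_edge p s (v @ [d])" for d
    by (simp add: tau_edge_N1)
  ultimately show "(\<Sum>w\<in>Esub s (v @ [0]). \<epsilon> (0 # w)) / tau_edge p s (v @ [0]) =
    (\<Sum>w\<in>Esub s (v @ [1]). \<epsilon> (0 # w)) / tau_edge p s (v @ [1])"
    using r[rule_format, of "0 # v"] v by simp
qed

lemma ratio_N20: "ratio p (Node2 l r) \<epsilon> \<Longrightarrow> ratio p l (\<lambda>w. \<epsilon> (0 # w))"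
  unfolding ratio_def
proof (intro allI impI)
  fix v assume r: "\<forall>v. v @ [0] \<in> verts (Node2 l r) \<longrightarrow> v @ [1] \<in> verts (Node2 l r) \<longrightarrow>
     sum \<epsilon> (Esub (Node2 l r) (v @ [0])) / tau_edge p (Node2 l r) (v @ [0]) =
     sum \<epsilon> (Esub (Node2 l r) (v @ [1])) / tau_edge p (Node2 l r) (v @ [1])"
    and v: "v @ [0] \<in> verts l" "v @ [1] \<in> verts l"
  have "sum \<epsilon> (Esub (Node2 l r) ((0 # v) @ [d])) = (\<Sum>w\<in>Esub l (v @ [d]). \<epsilon> (0 # w))" for d
    by (simp add: Esub_N2_cons0 sum_Cons)
  moreover have "tau_edge p (Node2 l r) ((0 # v) @ [d]) = tau_edge p l (v @ [d])" for d
    by (simp add: tau_edge_N20)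
  ultimately show "(\<Sum>w\<in>Esub l (v @ [0]). \<epsilon> (0 # w)) / tau_edge p l (v @ [0]) =
    (\<Sum>w\<in>Esub l (v @ [1]). \<epsilon> (0 # w)) / tau_edge p l (v @ [1])"
    using r[rule_format, of "0 # v"] v by simp
qed

lemma ratio_N21: "ratio p (Node2 l r) \<epsilon> \<Longrightarrow> ratio p r (\<lambda>w. \<epsilon> (1 # w))"
  unfolding ratio_def
proof (intro allI impI)
  fix v assume rr: "\<forall>v. v @ [0] \<in> verts (Node2 l r) \<longrightarrow> v @ [1] \<in> verts (Node2 l r) \<longrightarrow>
     sum \<epsilon> (Esub (Node2 l r) (v @ [0])) / tau_edge p (Node2 l r) (v @ [0]) =
     sum \<epsilon> (Esub (Node2 l r) (v @ [1])) / tau_edge p (Node2 l r) (v @ [1])"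
    and v: "v @ [0] \<in> verts r" "v @ [1] \<in> verts r"
  have "sum \<epsilon> (Esub (Node2 l r) ((Suc 0 # v) @ [d])) = (\<Sum>w\<in>Esub r (v @ [d]). \<epsilon> (1 # w))" for d
    by (simp add: Esub_N2_cons1 sum_Cons)
  moreover have "tau_edge p (Node2 l r) ((Suc 0 # v) @ [d]) = tau_edge p r (v @ [d])" for d
    by (simp add: tau_edge_N21)
  ultimately show "(\<Sum>w\<in>Esub r (v @ [0]). \<epsilon> (1 # w)) / tau_edge p r (v @ [0]) =
    (\<Sum>w\<in>Esub r (v @ [1]). \<epsilon> (1 # w)) / tau_edge p r (v @ [1])"
    using rr[rule_format, of "Suc 0 # v"] v by simp
qed


lemma sum_Esub_N1: "u \<noteq> [] \<Longrightarrow> sum (emass p (Node1 s)) (Esub (Node1 s) (0 # u)) = sum (emass p s) (Esub s u)"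
  unfolding Esub_N1_cons sum_Cons by (intro sum.cong) (auto dest: Esub_edges)
lemma sum_Esub_N20: "u \<noteq> [] \<Longrightarrow> sum (emass p (Node2 l r)) (Esub (Node2 l r) (0 # u)) = wl p l r * sum (emass p l) (Esub l u)"
  unfolding Esub_N2_cons0 sum_Cons sum_distrib_left by (intro sum.cong) (auto dest: Esub_edges)
lemma sum_Esub_N21: "u \<noteq> [] \<Longrightarrow> sum (emass p (Node2 l r)) (Esub (Node2 l r) (Suc 0 # u)) = wr p l r * sum (emass p r) (Esub r u)"
  unfolding Esub_N2_cons1 sum_Cons sum_distrib_left by (intro sum.cong) (auto dest: Esub_edges)

lemma ratio_emass: "0 < p \<Longrightarrow> p \<le> 1 \<Longrightarrow> ratio p t (emass p t)"
proof (induction t)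
  case Leaf then show ?case by (simp add: ratio_def)
next
  case (Node1 s)
  show ?case unfolding ratio_def
  proof (intro allI impI)
    fix v assume v: "v @ [0] \<in> verts (Node1 s)" "v @ [1] \<in> verts (Node1 s)"
    then obtain v' where v': "v = 0 # v'" "v' @ [0] \<in> verts s" "v' @ [1] \<in> verts s"
      by (cases v) auto
    have "sum (emass p s) (Esub s (v' @ [0])) / tau_edge p s (v' @ [0]) =
      sum (emass p s) (Esub s (v' @ [1])) / tau_edge p s (v' @ [1])"
      using Node1.IH[OF Node1.prems] v' unfolding ratio_def by blast
    then show "sum (emass p (Node1 s)) (Esub (Node1 s) (v @ [0])) / tau_edge p (Node1 s) (v @ [0]) =
      sum (emass p (Node1 s)) (Esub (Node1 s) (v @ [1])) / tau_edge p (Node1 s) (v @ [1])"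
      unfolding v'(1) by (simp add: sum_Esub_N1 tau_edge_N1)
  qed
next
  case (Node2 l r)
  have p: "0 < p" "p \<le> 1" by fact+
  show ?case unfolding ratio_def
  proof (intro allI impI)
    fix v assume v: "v @ [0] \<in> verts (Node2 l r)" "v @ [1] \<in> verts (Node2 l r)"
    show "sum (emass p (Node2 l r)) (Esub (Node2 l r) (v @ [0])) / tau_edge p (Node2 l r) (v @ [0]) =
      sum (emass p (Node2 l r)) (Esub (Node2 l r) (v @ [1])) / tau_edge p (Node2 l r) (v @ [1])"
    proof (cases v)
      case Nil
      have s0: "sum (emass p (Node2 l r)) (Esub (Node2 l r) [0]) = wl p l r"
        unfolding Esub_N2_nil0 sum_Cons using sum_vertsE[OF p, of l]
        by (simp add: sum_distrib_left[symmetric])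
      have s1: "sum (emass p (Node2 l r)) (Esub (Node2 l r) [1]) = wr p l r"
        unfolding Esub_N2_nil1 sum_Cons using sum_vertsE[OF p, of r]
        by (simp add: sum_distrib_left[symmetric])
      have t0: "tau_edge p (Node2 l r) [0] = te p l" "tau_edge p (Node2 l r) [1] = te p r"
        by (simp_all add: tau_edge_def te_def)
      have "wl p l r / te p l = wr p l r / te p r"
        using te_pos[OF p, of l] te_pos[OF p, of r] by (simp add: wl_def wr_def)
      then show ?thesis using Nil s0 s1 t0 by simp
    next
      case (Cons a v')
      show ?thesis
      proof (cases a)
        case 0
        then have v': "v' @ [0] \<in> verts l" "v' @ [1] \<in> verts l" using v Cons by auto
        have "sum (emass p l) (Esub l (v' @ [0])) / tau_edge p l (v' @ [0]) =
          sum (emass p l) (Esub l (v' @ [1])) / tau_edge p l (v' @ [1])"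
          using Node2.IH(1)[OF p] v' unfolding ratio_def by blast
        then show ?thesis unfolding Cons 0 by (simp add: sum_Esub_N20 tau_edge_N20) (metis times_divide_eq_right)
      next
        case (Suc n)
        then have n: "n = 0" using v Cons by (cases n) auto
        then have v': "v' @ [0] \<in> verts r" "v' @ [1] \<in> verts r" using v Cons Suc by auto
        have "sum (emass p r) (Esub r (v' @ [0])) / tau_edge p r (v' @ [0]) =
          sum (emass p r) (Esub r (v' @ [1])) / tau_edge p r (v' @ [1])"
          using Node2.IH(2)[OF p] v' unfolding ratio_def by blast
        then show ?thesis unfolding Cons Suc n by (simp add: sum_Esub_N21 tau_edge_N21) (metis times_divide_eq_right)
      qed
    qed
  qed
qed


lemma nonleaf0: "s \<noteq> Leaf \<Longrightarrow> [0] \<in> verts s" by (cases s) auto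

lemma sub_conds:
  assumes a: "\<forall>x. x \<notin> edges t \<longrightarrow> \<epsilon> x = 0"
    and b: "\<forall>x. x \<in> edges t \<longrightarrow> (\<exists>d. x @ [d] \<in> verts t) \<longrightarrow> \<epsilon> x = 0"
    and e0: "\<epsilon> [d0] = 0"
    and cv: "\<And>w. d0 # w \<in> verts t \<longleftrightarrow> w \<in> verts s"
  shows "\<forall>x. x \<notin> edges s \<longrightarrow> \<epsilon> (d0 # x) = 0"
    "\<forall>x. x \<in> edges s \<longrightarrow> (\<exists>d. x @ [d] \<in> verts s) \<longrightarrow> \<epsilon> (d0 # x) = 0"
proof -
  show "\<forall>x. x \<notin> edges s \<longrightarrow> \<epsilon> (d0 # x) = 0"
  proof (intro allI impI)
    fix x assume "x \<notin> edges s"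
    then show "\<epsilon> (d0 # x) = 0"
    proof (cases "x = []")
      case True then show ?thesis using e0 by simp
    next
      case False
      then have "x \<notin> verts s" using \<open>x \<notin> edges s\<close> by (simp add: edges_iff)
      then have "d0 # x \<notin> edges t" using cv by (simp add: edges_iff)
      then show ?thesis using a by blast
    qed
  qed
  show "\<forall>x. x \<in> edges s \<longrightarrow> (\<exists>d. x @ [d] \<in> verts s) \<longrightarrow> \<epsilon> (d0 # x) = 0"
  proof (intro allI impI)
    fix x assume x: "x \<in> edges s" "\<exists>d. x @ [d] \<in> verts s"
    then have "d0 # x \<in> edges t" "\<exists>d. (d0 # x) @ [d] \<in> verts t" using cv by (auto simp: edges_iff)
    then show "\<epsilon> (d0 # x) = 0" using b by blast
  qed
qed

lemma uniq:
  assumes p: "0 < p" "p \<le> 1"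
  shows "(\<forall>x. x \<notin> edges t \<longrightarrow> \<epsilon> x = 0) \<Longrightarrow> (\<forall>x. x \<in> edges t \<longrightarrow> (\<exists>d. x @ [d] \<in> verts t) \<longrightarrow> \<epsilon> x = 0)
    \<Longrightarrow> ratio p t \<epsilon> \<Longrightarrow> \<epsilon> x = sum \<epsilon> (edges t) * emass p t x"
proof (induction t arbitrary: \<epsilon> x)
  case Leaf then show ?case by simp
next
  case (Node1 s)
  note a = Node1.prems(1) and b = Node1.prems(2)
  show ?case
  proof (cases "x \<in> edges (Node1 s)")
    case False
    then have "emass p (Node1 s) x = 0" using emass_supp by blast
    then show ?thesis using a False by simp
  next
    case True
    then obtain w where x: "x = 0 # w" "w \<in> verts s" by (auto simp: edges_N1)
    show ?thesis
    proof (cases "s = Leaf")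
      case True
      then have "w = []" "edges (Node1 s) = {[0]}" using x by (auto simp: edges_N1)
      then show ?thesis using x True by simp
    next
      case False
      have e0: "\<epsilon> [0] = 0"
      proof (rule b[rule_format])
        show "[0] \<in> edges (Node1 s)" by (simp add: edges_iff)
        show "\<exists>d. [0] @ [d] \<in> verts (Node1 s)" using nonleaf0[OF False] by auto
      qed
      note sc = sub_conds[OF a b e0, of s]
      have IH: "\<epsilon> (0 # w) = sum (\<lambda>w. \<epsilon> (0 # w)) (edges s) * emass p s w"
        using Node1.IH[of "\<lambda>w. \<epsilon> (0 # w)" w] sc ratio_N1[OF Node1.prems(3)] by simp
      have S: "sum \<epsilon> (edges (Node1 s)) = sum (\<lambda>w. \<epsilon> (0 # w)) (edges s)" using e0 by (simp add: sum_N1)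
      show ?thesis using IH S x e0 False by (cases "w = []") auto
    qed
  qed
next
  case (Node2 l r)
  note a = Node2.prems(1) and b = Node2.prems(2)
  define A where "A = sum \<epsilon> (Esub (Node2 l r) [0])"
  define B where "B = sum \<epsilon> (Esub (Node2 l r) [1])"
  have AB: "sum \<epsilon> (edges (Node2 l r)) = A + B"
    unfolding A_def B_def Esub_N2_nil0 Esub_N2_nil1 sum_Cons sum_verts sum_N2 by simp
  have rt: "A / te p l = B / te p r"
    using Node2.prems(3) unfolding ratio_def A_def B_def
    by (metis (no_types) append_Nil cons_verts_Node2 nil_verts tau_edge_N20 tau_edge_N21 One_nat_def)
  have tl: "0 < te p l" "0 < te p r" using te_pos[OF p] by auto
  have Aw: "A = sum \<epsilon> (edges (Node2 l r)) * wl p l r" and Bw: "B = sum \<epsilon> (edges (Node2 l r)) * wr p l r"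
    unfolding AB wl_def wr_def using rt tl by (simp_all add: field_simps)
  show ?case
  proof (cases "x \<in> edges (Node2 l r)")
    case False
    then have "emass p (Node2 l r) x = 0" using emass_supp by blast
    then show ?thesis using a False by simp
  next
    case True
    then consider (L) w where "x = 0 # w" "w \<in> verts l" | (R) w where "x = 1 # w" "w \<in> verts r"
      by (auto simp: edges_N2)
    then show ?thesis
    proof cases
      case L
      show ?thesis
      proof (cases "l = Leaf")
        case True
        then have "w = []" "A = \<epsilon> [0]" using L unfolding A_def Esub_N2_nil0 by auto
        then show ?thesis using L True Aw by simp
      next
        case False
        have e0: "\<epsilon> [0] = 0"
        proof (rule b[rule_format])
          show "[0] \<in> edges (Node2 l r)" by (simp add: edges_iff)
          show "\<exists>d. [0] @ [d] \<in> verts (Node2 l r)" using nonleaf0[OF False] by auto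
        qed
        note sc = sub_conds[OF a b e0, of l]
        have IH: "\<epsilon> (0 # w) = sum (\<lambda>w. \<epsilon> (0 # w)) (edges l) * emass p l w"
          using Node2.IH(1)[of "\<lambda>w. \<epsilon> (0 # w)" w] sc ratio_N20[OF Node2.prems(3)] by simp
        have S: "sum (\<lambda>w. \<epsilon> (0 # w)) (edges l) = A"
          unfolding A_def Esub_N2_nil0 sum_Cons sum_verts using e0 by simp
        show ?thesis using IH S L e0 False Aw by (cases "w = []") auto
      qed
    next
      case R
      show ?thesis
      proof (cases "r = Leaf")
        case True
        then have "w = []" "B = \<epsilon> [1]" using R unfolding B_def Esub_N2_nil1 by auto
        then show ?thesis using R True Bw by simp
      next
        case False
        have e0: "\<epsilon> [1] = 0"
        proof (rule b[rule_format])
          show "[1] \<in> edges (Node2 l r)" by (simp add: edges_iff)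
          show "\<exists>d. [1] @ [d] \<in> verts (Node2 l r)" using nonleaf0[OF False] by auto
        qed
        note sc = sub_conds[OF a b e0, of r]
        have IH: "\<epsilon> (1 # w) = sum (\<lambda>w. \<epsilon> (1 # w)) (edges r) * emass p r w"
          using Node2.IH(2)[of "\<lambda>w. \<epsilon> (1 # w)" w] sc ratio_N21[OF Node2.prems(3)] by simp
        have S: "sum (\<lambda>w. \<epsilon> (1 # w)) (edges r) = B"
          unfolding B_def Esub_N2_nil1 sum_Cons sum_verts using e0 by simp
        show ?thesis using IH S R e0 False Bw by (cases "w = []") auto
      qed
    qed
  qed
qed


lemma children_iff: "c \<in> children t v \<longleftrightarrow> (\<exists>d. c = v @ [d] \<and> v @ [d] \<in> verts t)"
  unfolding children_def by auto

lemma emass_eb: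
  assumes p: "0 < p" "p \<le> 1" and t: "t \<noteq> Leaf"
  shows "is_equal_branching p t (emass p t)"
  unfolding is_equal_branching_def is_edge_dist_def
proof (intro conjI allI impI)
  fix x show "0 \<le> emass p t x" using emass_nonneg[OF p] .
next
  fix x assume "x \<notin> edges t" then show "emass p t x = 0" using emass_supp by blast
next
  show "sum (emass p t) (edges t) = 1" using emass_sum[OF p t] .
next
  fix x assume "x \<notin> leaf_edges t" then show "emass p t x = 0"
    using emass_supp[of p t x] unfolding leaf_edges_def children_def by blast
next
  fix v e1 e2 assume H: "v \<in> verts t \<and> e1 \<in> children t v \<and> e2 \<in> children t v \<and> e1 \<noteq> e2"
  then obtain d1 d2 where d: "e1 = v @ [d1]" "e2 = v @ [d2]" "v @ [d1] \<in> verts t" "v @ [d2] \<in> verts t" "d1 \<noteq> d2"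
    unfolding children_iff by blast
  then have "d1 \<le> 1" "d2 \<le> 1" using snoc_verts by auto
  then have "(d1 = 0 \<and> d2 = 1) \<or> (d1 = 1 \<and> d2 = 0)" using d(5) by auto
  moreover have "sum (emass p t) (Esub t (v @ [0])) / tau_edge p t (v @ [0]) =
     sum (emass p t) (Esub t (v @ [1])) / tau_edge p t (v @ [1])" if "v @ [0] \<in> verts t" "v @ [1] \<in> verts t"
    using ratio_emass[OF p, of t] that unfolding ratio_def by blast
  ultimately show "sum (emass p t) (Esub t e1) / tau_edge p t e1 = sum (emass p t) (Esub t e2) / tau_edge p t e2"
    using d by auto
qed

lemma eb_uniq:
  assumes p: "0 < p" "p \<le> 1" and eb: "is_equal_branching p t \<epsilon>"
  shows "\<epsilon> = emass p t"
proof
  fix x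
  have a: "\<forall>x. x \<notin> edges t \<longrightarrow> \<epsilon> x = 0" and s1: "sum \<epsilon> (edges t) = 1"
    using eb unfolding is_equal_branching_def is_edge_dist_def by auto
  have b: "\<forall>x. x \<in> edges t \<longrightarrow> (\<exists>d. x @ [d] \<in> verts t) \<longrightarrow> \<epsilon> x = 0"
  proof (intro allI impI)
    fix x assume "x \<in> edges t" "\<exists>d. x @ [d] \<in> verts t"
    then have "x \<notin> leaf_edges t" unfolding leaf_edges_def children_def by auto
    then show "\<epsilon> x = 0" using eb unfolding is_equal_branching_def by auto
  qed
  have c: "ratio p t \<epsilon>" unfolding ratio_def
  proof (intro allI impI)
    fix v assume v: "v @ [0] \<in> verts t" "v @ [1] \<in> verts t"
    have "v \<in> verts t" using snoc_verts v by auto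
    moreover have "v @ [0] \<in> children t v" "v @ [1] \<in> children t v" using v unfolding children_iff by auto
    moreover have "v @ [0] \<noteq> v @ [1]" by simp
    ultimately show "sum \<epsilon> (Esub t (v @ [0])) / tau_edge p t (v @ [0]) = sum \<epsilon> (Esub t (v @ [1])) / tau_edge p t (v @ [1])"
      using eb unfolding is_equal_branching_def by blast
  qed
  show "\<epsilon> x = emass p t x" using uniq[OF p a b c, of x] s1 by simp
qed

lemma eps_star_eq: "0 < p \<Longrightarrow> p \<le> 1 \<Longrightarrow> t \<noteq> Leaf \<Longrightarrow> eps_star p t = emass p t"
  unfolding eps_star_def using emass_eb eb_uniq by (intro the_equality) auto

theorem mainTheorem9:
  fixes t :: btree and p :: real and \<sigma> :: strategy
  assumes "t \<noteq> Leaf" and "0 < p" and "p \<le> 1" and "is_dfs t \<sigma>"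
  shows "payoff t p (eps_star p t) \<sigma> = ennreal (tau p t / 2 + Lam p t)"
proof -
  have "payoff t p (eps_star p t) \<sigma> = payoff t p (emass p t) \<sigma>"
    using eps_star_eq[OF assms(2,3,1)] by simp
  also have "\<dots> = (\<Sum>k. RN t p \<sigma> k)" by (rule payoff_eq[OF assms(2,3,4)])
  also have "\<dots> = ennreal (G p t)" by (rule chain[OF assms(2,3,4)])
  also have "\<dots> = ennreal (tau p t / 2 + Lam p t)" using G_eq[OF assms(2,3)] by simp
  finally show ?thesis .
qed


end
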